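(* Let $\mathbb{K}$ be a field, $m\ge 3$, $R=\mathbb{K}[T_1,\dots,T_m]$, and $I=\langle T_1^{a_1},\dots,T_m^{a_m},T_1^{b_1}\cdots T_m^{b_m}\rangle$ with $0\le b_i<a_i$ for all $i$ and $b_i\ne0$ for at least two $i$; let $L\subset S=R[X_1,\dots,X_m,W]$ be the defining ideal of its Rees algebra. Let $\mathcal{C}\subset\{\mathbf{c}\in\mathbb{N}^m\mid |\mathbf{c}|\ge2\}$ be a finite set such that $\Gamma_0\cup\{\mathcal{P}(W^{|\mathbf{c}|},\mathbf{X}^{\mathbf{c}})\mid \mathbf{c}\in\mathcal{C}\}$ is a Gröbner basis of $L$ with respect to $\tau$, and such that $\mathcal{C}$ is closed: if $\mathbf{c}\in\mathcal{C}$, $|\mathbf{c}'|\ge 2$ and $\mathbf{c}'\prec_{\tau'}\mathbf{c}$, then $\mathbf{c}'\in\mathcal{C}$. Order $\mathcal{C}=\{\mathbf{c}_1\prec_{\tau'}\cdots\prec_{\tau'}\mathbf{c}_N\}$ and for $0\le j\le N$ set $\mathcal{H}_j=\langle\Gamma_0\cup\{\mathcal{P}(W^{|\mathbf{c}_i|},\mathbf{X}^{\mathbf{c}_i})\mid 1\le i\le j\}\rangle$. Then for every $1\le j\le N$, the colon ideal $\operatorname{in}(\mathcal{H}_{j-1}):\operatorname{in}(\mathcal{P}(W^{|\mathbf{c}_j|},\mathbf{X}^{\mathbf{c}_j}))$ is extended from $R$, i.e., it equals $(J\cap R)S$ where $J$ denotes this colon ideal.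
   Context: Write $\mathbf{T}^{\mathbf{b}}=T_1^{b_1}\cdots T_m^{b_m}$. $L$ is the kernel of the $R$-algebra map $S\to R[Z]$, $X_i\mapsto T_i^{a_i}Z$, $W\mapsto\mathbf{T}^{\mathbf{b}}Z$. Set $X_{m+1}:=W$; for $\mathbf{c}\in\mathbb{N}^m$, $\mathbf{X}^{\mathbf{c}}=\prod X_i^{c_i}$ and $|\mathbf{c}|=\sum c_i$. Let $\Psi:S\to R$ be the $R$-algebra map $X_i\mapsto T_i^{a_i}$, $W\mapsto\mathbf{T}^{\mathbf{b}}$. For monomials $M,N$ in $X_1,\dots,X_m,W$, with $g=\gcd(\Psi(M),\Psi(N))$, set $\mathcal{P}(M,N)=\frac{\Psi(N)}{g}M-\frac{\Psi(M)}{g}N$. $\Gamma_0=\{\mathcal{P}(X_i,X_j)\mid 1\le j<i\le m+1\}$. The order $\tau$ is lex on $S$ with $W>X_m>\cdots>X_1>T_1>\cdots>T_m$; $\operatorname{in}(\cdot)$ denotes leading monomial / initial ideal with respect to $\tau$. The total order $\tau'$ on $\mathbb{N}^m$: $\boldsymbol\alpha\prec_{\tau'}\boldsymbol\beta$ iff $|\boldsymbol\alpha|<|\boldsymbol\beta|$, or $|\boldsymbol\alpha|=|\boldsymbol\beta|$ and there is $i_0$ with $\alpha_{i_0}>\beta_{i_0}$ and $\alpha_i=\beta_i$ for all $i>i_0$. *)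

theory Defs
  imports Main "HOL-Library.Poly_Mapping"
begin

text \<open>Variables of the ambient polynomial ring: T i (1 \<le> i \<le> m), X i (1 \<le> i \<le> m),
  W, and the auxiliary variable Z used for the Rees map S \<rightarrow> R[Z].\<close>

datatype var = T nat | X nat | Wv | Zv

type_synonym mon = "var \<Rightarrow>\<^sub>0 nat"
type_synonym 'k mpoly = "mon \<Rightarrow>\<^sub>0 'k"

definition monom :: "mon \<Rightarrow> 'k::zero \<Rightarrow> 'k mpoly" where
  "monom \<alpha> c = Poly_Mapping.single \<alpha> c"

definition Rvars :: "nat \<Rightarrow> var set" where
  "Rvars m = T ` {1..m}"

definition Svars :: "nat \<Rightarrow> var set" where
  "Svars m = T ` {1..m} \<union> X ` {1..m} \<union> {Wv}"

definition polys_in :: "var set \<Rightarrow> ('k::zero) mpoly set" where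
  "polys_in V = {p :: 'k mpoly. \<forall>\<alpha>\<in>Poly_Mapping.keys p. Poly_Mapping.keys \<alpha> \<subseteq> V}"

abbreviation Rring :: "nat \<Rightarrow> ('k::zero) mpoly set" where
  "Rring m \<equiv> polys_in (Rvars m)"

abbreviation Sring :: "nat \<Rightarrow> ('k::zero) mpoly set" where
  "Sring m \<equiv> polys_in (Svars m)"

definition ideal_gen :: "('k::comm_ring_1) mpoly set \<Rightarrow> 'k mpoly set \<Rightarrow> 'k mpoly set" where
  "ideal_gen A G = {p. \<exists>F c. finite F \<and> F \<subseteq> G \<and> (\<forall>g\<in>F. c g \<in> A) \<and> p = (\<Sum>g\<in>F. c g * g)}"

definition colon_ideal :: "('k::comm_ring_1) mpoly set \<Rightarrow> 'k mpoly set \<Rightarrow> 'k mpoly \<Rightarrow> 'k mpoly set" where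
  "colon_ideal A I f = {g \<in> A. g * f \<in> I}"

text \<open>If every variable is sent to a monomial, the algebra map sends a monomial x^\<alpha>
  to the monomial x^(\<phi> \<alpha>), \<phi> additive; it is extended linearly.\<close>
definition mon_map :: "(mon \<Rightarrow> mon) \<Rightarrow> ('k::comm_ring_1) mpoly \<Rightarrow> 'k mpoly" where
  "mon_map \<phi> p = (\<Sum>\<alpha>\<in>Poly_Mapping.keys p. monom (\<phi> \<alpha>) (Poly_Mapping.lookup p \<alpha>))"

definition Texp :: "nat \<Rightarrow> (nat \<Rightarrow> nat) \<Rightarrow> mon" where
  "Texp m b = (\<Sum>i\<in>{1..m}. Poly_Mapping.single (T i) (b i))"

text \<open>\<Psi>: T_i \<mapsto> T_i, X_i \<mapsto> T_i^{a_i}, W \<mapsto> T^b, on exponents.\<close>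
definition psi_exp :: "nat \<Rightarrow> (nat \<Rightarrow> nat) \<Rightarrow> (nat \<Rightarrow> nat) \<Rightarrow> mon \<Rightarrow> mon" where
  "psi_exp m a b \<alpha> = (\<Sum>i\<in>{1..m}. Poly_Mapping.single (T i)
       (Poly_Mapping.lookup \<alpha> (T i) + Poly_Mapping.lookup \<alpha> (X i) * a i + Poly_Mapping.lookup \<alpha> Wv * b i))"

definition Psi :: "nat \<Rightarrow> (nat \<Rightarrow> nat) \<Rightarrow> (nat \<Rightarrow> nat) \<Rightarrow> ('k::comm_ring_1) mpoly \<Rightarrow> 'k mpoly" where
  "Psi m a b = mon_map (psi_exp m a b)"

text \<open>Rees map S \<rightarrow> R[Z]: T_i \<mapsto> T_i, X_i \<mapsto> T_i^{a_i} Z, W \<mapsto> T^b Z.\<close>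
definition rees_exp :: "nat \<Rightarrow> (nat \<Rightarrow> nat) \<Rightarrow> (nat \<Rightarrow> nat) \<Rightarrow> mon \<Rightarrow> mon" where
  "rees_exp m a b \<alpha> = psi_exp m a b \<alpha> +
     Poly_Mapping.single Zv (Poly_Mapping.lookup \<alpha> Wv + (\<Sum>i\<in>{1..m}. Poly_Mapping.lookup \<alpha> (X i)))"

definition rees_map :: "nat \<Rightarrow> (nat \<Rightarrow> nat) \<Rightarrow> (nat \<Rightarrow> nat) \<Rightarrow> ('k::comm_ring_1) mpoly \<Rightarrow> 'k mpoly" where
  "rees_map m a b = mon_map (rees_exp m a b)"

definition Lideal :: "nat \<Rightarrow> (nat \<Rightarrow> nat) \<Rightarrow> (nat \<Rightarrow> nat) \<Rightarrow> ('k::comm_ring_1) mpoly set" where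
  "Lideal m a b = {p \<in> Sring m. rees_map m a b p = 0}"

lift_definition mgcd :: "mon \<Rightarrow> mon \<Rightarrow> mon" is "\<lambda>f g v. min (f v) (g v)"
proof -
  fix f g :: "var \<Rightarrow> nat"
  assume "finite {v. f v \<noteq> 0}"
  then show "finite {v. min (f v) (g v) \<noteq> 0}"
    by (rule finite_subset[rotated]) auto
qed

text \<open>For monomials M = x^\<mu>, N = x^\<nu> with g = gcd(\<Psi>(M),\<Psi>(N)):
  P(M,N) = (\<Psi>(N)/g) M - (\<Psi>(M)/g) N.\<close>
definition Pbin :: "nat \<Rightarrow> (nat \<Rightarrow> nat) \<Rightarrow> (nat \<Rightarrow> nat) \<Rightarrow> mon \<Rightarrow> mon \<Rightarrow> ('k::comm_ring_1) mpoly" where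
  "Pbin m a b \<mu> \<nu> =
     (let g = mgcd (psi_exp m a b \<mu>) (psi_exp m a b \<nu>) in
       monom ((psi_exp m a b \<nu> - g) + \<mu>) 1 - monom ((psi_exp m a b \<mu> - g) + \<nu>) 1)"

definition Xv :: "nat \<Rightarrow> nat \<Rightarrow> var" where
  "Xv m i = (if i = m + 1 then Wv else X i)"

definition Gamma0 :: "nat \<Rightarrow> (nat \<Rightarrow> nat) \<Rightarrow> (nat \<Rightarrow> nat) \<Rightarrow> ('k::comm_ring_1) mpoly set" where
  "Gamma0 m a b = {Pbin m a b (Poly_Mapping.single (Xv m i) 1) (Poly_Mapping.single (Xv m j) 1)
                    | i j. 1 \<le> j \<and> j < i \<and> i \<le> m + 1}"

definition Nvec :: "nat \<Rightarrow> (nat \<Rightarrow> nat) set" where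
  "Nvec m = {c. \<forall>i. i \<notin> {1..m} \<longrightarrow> c i = 0}"

definition vabs :: "nat \<Rightarrow> (nat \<Rightarrow> nat) \<Rightarrow> nat" where
  "vabs m c = (\<Sum>i\<in>{1..m}. c i)"

definition Xmon :: "nat \<Rightarrow> (nat \<Rightarrow> nat) \<Rightarrow> mon" where
  "Xmon m c = (\<Sum>i\<in>{1..m}. Poly_Mapping.single (X i) (c i))"

definition Wmon :: "nat \<Rightarrow> mon" where
  "Wmon k = Poly_Mapping.single Wv k"

definition tau'_less :: "nat \<Rightarrow> (nat \<Rightarrow> nat) \<Rightarrow> (nat \<Rightarrow> nat) \<Rightarrow> bool" where
  "tau'_less m \<alpha> \<beta> \<longleftrightarrow> vabs m \<alpha> < vabs m \<beta> \<or>
     (vabs m \<alpha> = vabs m \<beta> \<and>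
       (\<exists>i0\<in>{1..m}. \<alpha> i0 > \<beta> i0 \<and> (\<forall>i\<in>{1..m}. i > i0 \<longrightarrow> \<alpha> i = \<beta> i)))"

definition var_rank :: "nat \<Rightarrow> nat \<Rightarrow> var" where
  "var_rank m k = (if k = 0 then Wv
                   else if k \<le> m then X (m + 1 - k)
                   else if k \<le> 2 * m then T (k - m)
                   else Zv)"

definition lex_less :: "nat \<Rightarrow> mon \<Rightarrow> mon \<Rightarrow> bool" where
  "lex_less m \<alpha> \<beta> \<longleftrightarrow> (\<exists>k. (\<forall>j<k. Poly_Mapping.lookup \<alpha> (var_rank m j) = Poly_Mapping.lookup \<beta> (var_rank m j))
                              \<and> Poly_Mapping.lookup \<alpha> (var_rank m k) < Poly_Mapping.lookup \<beta> (var_rank m k))"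

definition lead_mon :: "nat \<Rightarrow> ('k::zero) mpoly \<Rightarrow> mon" where
  "lead_mon m p = (THE \<alpha>. \<alpha> \<in> Poly_Mapping.keys p \<and> (\<forall>\<beta>\<in>Poly_Mapping.keys p. \<beta> \<noteq> \<alpha> \<longrightarrow> lex_less m \<beta> \<alpha>))"

definition init :: "nat \<Rightarrow> ('k::comm_ring_1) mpoly \<Rightarrow> 'k mpoly" where
  "init m p = monom (lead_mon m p) 1"

definition init_ideal :: "nat \<Rightarrow> ('k::comm_ring_1) mpoly set \<Rightarrow> 'k mpoly set" where
  "init_ideal m H = ideal_gen (Sring m) {init m p | p. p \<in> H \<and> p \<noteq> 0}"

definition groebner_basis :: "nat \<Rightarrow> ('k::comm_ring_1) mpoly set \<Rightarrow> 'k mpoly set \<Rightarrow> bool" where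
  "groebner_basis m G I \<longleftrightarrow> finite G \<and> G \<subseteq> I \<and>
     init_ideal m I = ideal_gen (Sring m) {init m g | g. g \<in> G \<and> g \<noteq> 0}"

end

theory Submission
  imports Defs
begin


abbreviation lk :: "('a \<Rightarrow>\<^sub>0 'b::zero) \<Rightarrow> 'a \<Rightarrow> 'b" where "lk \<equiv> Poly_Mapping.lookup"

definition Dm :: "nat \<Rightarrow> mon set" where "Dm m = {\<alpha>. Poly_Mapping.keys \<alpha> \<subseteq> Svars m}"

definition mdvd :: "mon \<Rightarrow> mon \<Rightarrow> bool" where "mdvd p y \<longleftrightarrow> (\<forall>v. lk p v \<le> lk y v)"

lemma lk_mult_single_shift:
  fixes c :: "('a::cancel_comm_monoid_add \<Rightarrow>\<^sub>0 'k::comm_ring_1)"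
  shows "lk (c * Poly_Mapping.single p v) (\<alpha> + p) = lk c \<alpha> * v"
proof -
  have "lk (c * Poly_Mapping.single p v) (\<alpha> + p) = (\<Sum>l. lk c l * (\<Sum>q. (v when p = q) when \<alpha> + p = l + q))"
    by (simp add: lookup_mult lookup_single)
  also have "\<dots> = (\<Sum>l. lk c l * (v when \<alpha> + p = l + p))"
    by (subst when_commute) simp
  also have "\<dots> = (\<Sum>l. (lk c l * v when l = \<alpha>))"
    by (simp add: mult_when eq_commute)
  also have "\<dots> = lk c \<alpha> * v" by simp
  finally show ?thesis .
qed

lemma lk_mult_single_not:
  fixes c :: "('a::cancel_comm_monoid_add \<Rightarrow>\<^sub>0 'k::comm_ring_1)"
  assumes "\<forall>\<alpha>. \<beta> \<noteq> \<alpha> + p"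
  shows "lk (c * Poly_Mapping.single p v) \<beta> = 0"
proof -
  have "lk (c * Poly_Mapping.single p v) \<beta> = (\<Sum>l. lk c l * (\<Sum>q. (v when p = q) when \<beta> = l + q))"
    by (simp add: lookup_mult lookup_single)
  also have "\<dots> = (\<Sum>l. lk c l * (v when \<beta> = l + p))"
    by (subst when_commute) simp
  also have "\<dots> = 0" using assms by simp
  finally show ?thesis .
qed

lemma poly_expand:
  fixes f :: "'a \<Rightarrow>\<^sub>0 'b::comm_monoid_add"
  shows "f = (\<Sum>\<alpha>\<in>Poly_Mapping.keys f. Poly_Mapping.single \<alpha> (lk f \<alpha>))"
proof (rule poly_mapping_eqI)
  fix x
  have "lk (\<Sum>\<alpha>\<in>Poly_Mapping.keys f. Poly_Mapping.single \<alpha> (lk f \<alpha>)) x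
        = (\<Sum>\<alpha>\<in>Poly_Mapping.keys f. (if \<alpha> = x then lk f \<alpha> else 0))"
    by (simp add: lookup_sum lookup_single when_def)
  also have "\<dots> = lk f x"
    by (simp add: sum.delta' in_keys_iff)
  finally show "lk f x = lk (\<Sum>\<alpha>\<in>Poly_Mapping.keys f. Poly_Mapping.single \<alpha> (lk f \<alpha>)) x" by simp
qed

lemma keys_add_nat: "Poly_Mapping.keys ((\<alpha>::'a \<Rightarrow>\<^sub>0 nat) + \<beta>) = Poly_Mapping.keys \<alpha> \<union> Poly_Mapping.keys \<beta>"
  by (auto simp: in_keys_iff lookup_add)

lemma Dm_add[simp]: "\<alpha> + \<beta> \<in> Dm m \<longleftrightarrow> \<alpha> \<in> Dm m \<and> \<beta> \<in> Dm m"
  by (auto simp: Dm_def keys_add_nat)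

lemma Dm_minus: "\<alpha> \<in> Dm m \<Longrightarrow> (\<alpha>::mon) - \<beta> \<in> Dm m"
  unfolding Dm_def by (auto simp: in_keys_iff lookup_minus)

lemma mdvd_decomp: "mdvd p y \<Longrightarrow> y = (y - p) + p"
  unfolding mdvd_def by (intro poly_mapping_eqI) (simp add: lookup_add lookup_minus)

lemma mdvd_add: "mdvd p (s + p)"
  unfolding mdvd_def by (simp add: lookup_add)

lemma mdvd_trans: "mdvd p q \<Longrightarrow> mdvd q r \<Longrightarrow> mdvd p r"
  unfolding mdvd_def using order_trans by blast

section \<open>The lex order\<close>

lemma var_rank_surj:
  assumes "x \<in> Svars m" shows "\<exists>k \<le> 2*m. var_rank m k = x"
proof -
  consider (T) i where "x = T i" "i \<in> {1..m}" | (X) i where "x = X i" "i \<in> {1..m}" | (W) "x = Wv"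
    using assms unfolding Svars_def by blast
  then show ?thesis
  proof cases
    case T then show ?thesis by (intro exI[of _ "m + i"]) (auto simp: var_rank_def)
  next
    case X then show ?thesis by (intro exI[of _ "m + 1 - i"]) (auto simp: var_rank_def)
  next
    case W then show ?thesis by (intro exI[of _ 0]) (auto simp: var_rank_def)
  qed
qed

lemma var_rank_big: "k > 2*m \<Longrightarrow> var_rank m k = Zv"
  by (auto simp: var_rank_def)

lemma Zv_notin: "Zv \<notin> Svars m" by (auto simp: Svars_def)

lemma Dm_Zv: "\<alpha> \<in> Dm m \<Longrightarrow> lk \<alpha> Zv = 0"
  using Zv_notin unfolding Dm_def by (auto simp: in_keys_iff)

lemma Dm_eqI:
  assumes "\<alpha> \<in> Dm m" "\<beta> \<in> Dm m" "\<And>k. lk \<alpha> (var_rank m k) = lk \<beta> (var_rank m k)"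
  shows "\<alpha> = \<beta>"
proof (rule poly_mapping_eqI)
  fix x
  show "lk \<alpha> x = lk \<beta> x"
  proof (cases "x \<in> Svars m")
    case True
    then obtain k where "var_rank m k = x" using var_rank_surj by blast
    then show ?thesis using assms(3) by metis
  next
    case False
    then have "x \<notin> Poly_Mapping.keys \<alpha>" "x \<notin> Poly_Mapping.keys \<beta>" using assms(1,2) unfolding Dm_def by blast+
    then show ?thesis by (simp add: in_keys_iff)
  qed
qed

lemma lex_less_irrefl: "\<not> lex_less m \<alpha> \<alpha>"
  by (auto simp: lex_less_def)

lemma lex_less_trans:
  assumes "lex_less m \<alpha> \<beta>" "lex_less m \<beta> \<gamma>" shows "lex_less m \<alpha> \<gamma>"
proof -
  obtain k1 where k1: "\<forall>j<k1. lk \<alpha> (var_rank m j) = lk \<beta> (var_rank m j)"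
     "lk \<alpha> (var_rank m k1) < lk \<beta> (var_rank m k1)" using assms(1) by (auto simp: lex_less_def)
  obtain k2 where k2: "\<forall>j<k2. lk \<beta> (var_rank m j) = lk \<gamma> (var_rank m j)"
     "lk \<beta> (var_rank m k2) < lk \<gamma> (var_rank m k2)" using assms(2) by (auto simp: lex_less_def)
  show ?thesis
  proof (cases k1 k2 rule: linorder_cases)
    case less
    then show ?thesis using k1 k2 unfolding lex_less_def by (intro exI[of _ k1]) auto
  next
    case equal
    then show ?thesis using k1 k2 unfolding lex_less_def by (intro exI[of _ k1]) auto
  next
    case greater
    then show ?thesis using k1 k2 unfolding lex_less_def by (intro exI[of _ k2]) auto
  qed
qed

lemma lex_less_asym: "lex_less m \<alpha> \<beta> \<Longrightarrow> \<not> lex_less m \<beta> \<alpha>"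
  using lex_less_trans lex_less_irrefl by blast

lemma lex_less_add: "lex_less m \<alpha> \<beta> \<Longrightarrow> lex_less m (s + \<alpha>) (s + \<beta>)"
  unfolding lex_less_def by (auto simp: lookup_add)

lemma lex_less_total:
  assumes "\<alpha> \<in> Dm m" "\<beta> \<in> Dm m" "\<alpha> \<noteq> \<beta>"
  shows "lex_less m \<alpha> \<beta> \<or> lex_less m \<beta> \<alpha>"
proof -
  have ex: "\<exists>k. lk \<alpha> (var_rank m k) \<noteq> lk \<beta> (var_rank m k)"
    using Dm_eqI[OF assms(1,2)] assms(3) by blast
  define k0 where "k0 = (LEAST k. lk \<alpha> (var_rank m k) \<noteq> lk \<beta> (var_rank m k))"
  have d: "lk \<alpha> (var_rank m k0) \<noteq> lk \<beta> (var_rank m k0)"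
    unfolding k0_def using LeastI_ex[OF ex] .
  have e: "\<forall>j<k0. lk \<alpha> (var_rank m j) = lk \<beta> (var_rank m j)"
    unfolding k0_def using not_less_Least by blast
  show ?thesis
  proof (cases "lk \<alpha> (var_rank m k0) < lk \<beta> (var_rank m k0)")
    case True
    have "lex_less m \<alpha> \<beta>" unfolding lex_less_def using e True by blast
    then show ?thesis ..
  next
    case False
    then have lt: "lk \<beta> (var_rank m k0) < lk \<alpha> (var_rank m k0)" using d by simp
    have "lex_less m \<beta> \<alpha>" unfolding lex_less_def using e lt by (intro exI[of _ k0]) simp
    then show ?thesis ..
  qed
qed

definition lexvec :: "nat \<Rightarrow> mon \<Rightarrow> nat list" where
  "lexvec m \<alpha> = map (\<lambda>k. lk \<alpha> (var_rank m k)) [0..<Suc (2*m)]"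

lemma lex_less_lexn:
  assumes "\<alpha> \<in> Dm m" "\<beta> \<in> Dm m" "lex_less m \<alpha> \<beta>"
  shows "(lexvec m \<alpha>, lexvec m \<beta>) \<in> lexn less_than (Suc (2*m))"
proof -
  obtain k where k: "\<forall>j<k. lk \<alpha> (var_rank m j) = lk \<beta> (var_rank m j)"
     "lk \<alpha> (var_rank m k) < lk \<beta> (var_rank m k)" using assms(3) by (auto simp: lex_less_def)
  have kle: "k < Suc (2*m)"
  proof (rule ccontr)
    assume "\<not> ?thesis"
    then have "var_rank m k = Zv" by (intro var_rank_big) auto
    then show False using k(2) Dm_Zv[OF assms(1)] Dm_Zv[OF assms(2)] by simp
  qed
  let ?a = "lexvec m \<alpha>" and ?b = "lexvec m \<beta>"
  have la: "length ?a = Suc (2*m)" and lb: "length ?b = Suc (2*m)" by (simp_all add: lexvec_def)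
  have tk: "take k ?a = take k ?b"
    using k(1) kle by (intro nth_equalityI) (auto simp: lexvec_def)
  have "?a = take k ?a @ ?a ! k # drop (Suc k) ?a" by (rule id_take_nth_drop) (simp add: la kle)
  moreover have "?b = take k ?a @ ?b ! k # drop (Suc k) ?b" unfolding tk by (rule id_take_nth_drop) (simp add: lb kle)
  moreover have "(?a ! k, ?b ! k) \<in> less_than" using k(2) kle by (simp add: lexvec_def del: upt_Suc)
  ultimately show ?thesis unfolding lexn_conv using la lb by blast
qed

lemma wf_lex: "wf {(\<alpha>, \<beta>). \<alpha> \<in> Dm m \<and> \<beta> \<in> Dm m \<and> lex_less m \<alpha> \<beta>}"
proof (rule wf_subset)
  show "wf (inv_image (lexn less_than (Suc (2*m))) (lexvec m))"
    by (intro wf_inv_image wf_lexn wf_less_than)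
  show "{(\<alpha>, \<beta>). \<alpha> \<in> Dm m \<and> \<beta> \<in> Dm m \<and> lex_less m \<alpha> \<beta>} \<subseteq> inv_image (lexn less_than (Suc (2*m))) (lexvec m)"
    using lex_less_lexn by auto
qed

lemma lex_max_exists:
  assumes "finite A" "A \<noteq> {}" "A \<subseteq> Dm m"
  shows "\<exists>x\<in>A. \<forall>y\<in>A. y \<noteq> x \<longrightarrow> lex_less m y x"
  using assms
proof (induction A rule: finite_ne_induct)
  case (singleton x) then show ?case by simp
next
  case (insert x F)
  have FD: "F \<subseteq> Dm m" and xD: "x \<in> Dm m" using insert.prems by simp_all
  obtain z where z: "z \<in> F" "\<forall>y\<in>F. y \<noteq> z \<longrightarrow> lex_less m y z" using insert.IH[OF FD] by blast
  have zD: "z \<in> Dm m" using FD z(1) by blast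
  have xz: "x \<noteq> z" using insert.hyps(3) z(1) by blast
  show ?case
  proof (cases "lex_less m x z")
    case True
    have "\<forall>y\<in>insert x F. y \<noteq> z \<longrightarrow> lex_less m y z" using True z(2) by simp
    then show ?thesis using z(1) by blast
  next
    case False
    then have zx: "lex_less m z x" using lex_less_total[OF xD zD xz] by simp
    have "\<forall>y\<in>insert x F. y \<noteq> x \<longrightarrow> lex_less m y x"
    proof
      fix y assume "y \<in> insert x F"
      then show "y \<noteq> x \<longrightarrow> lex_less m y x"
        using z(2) zx lex_less_trans[of m y z x] by auto
    qed
    then show ?thesis by blast
  qed
qed

lemma Sring_keys: "p \<in> Sring m \<Longrightarrow> Poly_Mapping.keys p \<subseteq> Dm m"
  by (auto simp: polys_in_def Dm_def)

lemma Sring_iff: "p \<in> Sring m \<longleftrightarrow> Poly_Mapping.keys p \<subseteq> Dm m"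
  by (auto simp: polys_in_def Dm_def)

lemma lead_mon_prop:
  assumes "p \<in> Sring m" "p \<noteq> 0"
  shows "lead_mon m p \<in> Poly_Mapping.keys p \<and>
         (\<forall>\<beta>\<in>Poly_Mapping.keys p. \<beta> \<noteq> lead_mon m p \<longrightarrow> lex_less m \<beta> (lead_mon m p))"
proof -
  have "\<exists>x\<in>Poly_Mapping.keys p. \<forall>y\<in>Poly_Mapping.keys p. y \<noteq> x \<longrightarrow> lex_less m y x"
    using assms by (intro lex_max_exists) (auto simp: Sring_keys)
  then have ex1: "\<exists>!x. x \<in> Poly_Mapping.keys p \<and> (\<forall>y\<in>Poly_Mapping.keys p. y \<noteq> x \<longrightarrow> lex_less m y x)"
    using lex_less_asym by metis
  show ?thesis unfolding lead_mon_def using theI'[OF ex1] .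
qed

lemma binom_lookup:
  assumes "p \<noteq> q"
  shows "lk (monom p 1 - monom q (1::'k::comm_ring_1)) x = (if x = p then 1 else if x = q then -1 else 0)"
  using assms by (auto simp: monom_def lookup_minus lookup_single when_def)

lemma binom_keys:
  assumes "p \<noteq> q"
  shows "Poly_Mapping.keys (monom p 1 - monom q (1::'k::comm_ring_1)) = {p, q}"
proof (rule set_eqI)
  fix x
  show "x \<in> Poly_Mapping.keys (monom p 1 - monom q (1::'k)) \<longleftrightarrow> x \<in> {p, q}"
    unfolding in_keys_iff binom_lookup[OF assms] by (cases "x = p"; cases "x = q") simp_all
qed

lemma binom_nonzero:
  assumes "p \<noteq> q"
  shows "monom p 1 - monom q (1::'k::comm_ring_1) \<noteq> 0"
  using binom_keys[OF assms, where 'k='k] by auto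

lemma binom_Sring:
  assumes "p \<in> Dm m" "q \<in> Dm m"
  shows "monom p 1 - monom q (1::'k::comm_ring_1) \<in> Sring m"
proof (cases "p = q")
  case True then show ?thesis by (simp add: polys_in_def)
next
  case False then show ?thesis using assms by (simp add: Sring_iff binom_keys)
qed

lemma lead_mon_binom:
  assumes "p \<in> Dm m" "q \<in> Dm m" "lex_less m q p"
  shows "lead_mon m (monom p 1 - monom q (1::'k::comm_ring_1)) = p"
proof -
  have pq: "p \<noteq> q" using assms(3) lex_less_irrefl by blast
  show ?thesis unfolding lead_mon_def
    by (rule the_equality) (use pq assms(3) lex_less_asym in \<open>auto simp: binom_keys[OF pq]\<close>)
qed

lemma Sring_zero: "0 \<in> polys_in V" by (simp add: polys_in_def)
lemma Sring_one: "1 \<in> polys_in V" by (simp add: polys_in_def)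

lemma Sring_add: "p \<in> polys_in V \<Longrightarrow> q \<in> polys_in V \<Longrightarrow> p + q \<in> polys_in V"
  unfolding polys_in_def mem_Collect_eq
proof (intro ballI)
  fix \<alpha>
  assume a: "\<forall>\<alpha>\<in>Poly_Mapping.keys p. Poly_Mapping.keys \<alpha> \<subseteq> V" "\<forall>\<alpha>\<in>Poly_Mapping.keys q. Poly_Mapping.keys \<alpha> \<subseteq> V"
    and b: "\<alpha> \<in> Poly_Mapping.keys (p + q)"
  have "\<alpha> \<in> Poly_Mapping.keys p \<union> Poly_Mapping.keys q" using keys_add b by (rule subsetD)
  then show "Poly_Mapping.keys \<alpha> \<subseteq> V" using a by (cases "\<alpha> \<in> Poly_Mapping.keys p") auto
qed

lemma Sring_uminus: "(p::'k::ab_group_add mpoly) \<in> polys_in V \<Longrightarrow> - p \<in> polys_in V"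
  unfolding polys_in_def by (simp add: keys_minus)

lemma Sring_diff: "(p::'k::ab_group_add mpoly) \<in> polys_in V \<Longrightarrow> q \<in> polys_in V \<Longrightarrow> p - q \<in> polys_in V"
proof -
  assume a: "p \<in> polys_in V" "q \<in> polys_in V"
  have "p - q = p + (- q)" by simp
  then show ?thesis using Sring_add[OF a(1) Sring_uminus[OF a(2)]] by simp
qed

lemma Sring_mult: "p \<in> polys_in V \<Longrightarrow> q \<in> polys_in V \<Longrightarrow> p * q \<in> polys_in V"
proof -
  assume a: "p \<in> polys_in V" "q \<in> polys_in V"
  have "Poly_Mapping.keys \<alpha> \<subseteq> V" if "\<alpha> \<in> Poly_Mapping.keys (p * q)" for \<alpha>
  proof -
    have "\<alpha> \<in> {a + b |a b. a \<in> Poly_Mapping.keys p \<and> b \<in> Poly_Mapping.keys q}"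
      using keys_mult[of p q] that by (rule subsetD)
    then obtain x y where xy: "\<alpha> = x + y" "x \<in> Poly_Mapping.keys p" "y \<in> Poly_Mapping.keys q"
      by blast
    have "Poly_Mapping.keys x \<subseteq> V" "Poly_Mapping.keys y \<subseteq> V"
      using a xy(2,3) unfolding polys_in_def by auto
    then show ?thesis unfolding xy(1) keys_add_nat by blast
  qed
  then show ?thesis unfolding polys_in_def by blast
qed

lemma Sring_sum: "finite F \<Longrightarrow> (\<And>x. x \<in> F \<Longrightarrow> f x \<in> polys_in V) \<Longrightarrow> sum f F \<in> polys_in V"
  by (induction F rule: finite_induct) (auto intro: Sring_add Sring_zero)

lemma Sring_monom: "Poly_Mapping.keys \<alpha> \<subseteq> V \<Longrightarrow> monom \<alpha> c \<in> polys_in V"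
  by (simp add: polys_in_def monom_def)

lemma ideal_gen_zero: "0 \<in> ideal_gen A G"
  unfolding ideal_gen_def by (rule CollectI, rule exI[of _ "{}"], rule exI[of _ "\<lambda>_. 0"]) simp

lemma ideal_gen_gen:
  assumes "g \<in> G" "c \<in> A" shows "c * g \<in> ideal_gen A G"
  unfolding ideal_gen_def
  by (rule CollectI, rule exI[of _ "{g}"], rule exI[of _ "\<lambda>_. c"]) (use assms in auto)

lemma ideal_gen_add:
  assumes A0: "0 \<in> A" and Aadd: "\<And>x y. x \<in> A \<Longrightarrow> y \<in> A \<Longrightarrow> x + y \<in> A"
    and x: "x \<in> ideal_gen A G" and y: "y \<in> ideal_gen A G"
  shows "x + y \<in> ideal_gen A G"
proof -
  obtain F1 c1 where F1: "finite F1" "F1 \<subseteq> G" "\<forall>g\<in>F1. c1 g \<in> A" "x = (\<Sum>g\<in>F1. c1 g * g)"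
    using x unfolding ideal_gen_def by blast
  obtain F2 c2 where F2: "finite F2" "F2 \<subseteq> G" "\<forall>g\<in>F2. c2 g \<in> A" "y = (\<Sum>g\<in>F2. c2 g * g)"
    using y unfolding ideal_gen_def by blast
  define c where "c g = (if g \<in> F1 then c1 g else 0) + (if g \<in> F2 then c2 g else 0)" for g
  have eq: "c g * g = (if g \<in> F1 then c1 g * g else 0) + (if g \<in> F2 then c2 g * g else 0)" for g
    unfolding c_def by (simp add: distrib_right)
  have fin: "finite (F1 \<union> F2)" using F1(1) F2(1) by simp
  have s1: "(\<Sum>g\<in>F1 \<union> F2. (if g \<in> F1 then c1 g * g else 0)) = x"
    using sum.inter_restrict[OF fin, of "\<lambda>g. c1 g * g" F1] F1(4) by (simp add: Int_absorb2)
  have s2: "(\<Sum>g\<in>F1 \<union> F2. (if g \<in> F2 then c2 g * g else 0)) = y"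
    using sum.inter_restrict[OF fin, of "\<lambda>g. c2 g * g" F2] F2(4) by (simp add: Int_absorb2)
  have "x + y = (\<Sum>g\<in>F1 \<union> F2. c g * g)"
    unfolding eq sum.distrib s1 s2 ..
  moreover have "\<forall>g\<in>F1 \<union> F2. c g \<in> A"
  proof
    fix g assume "g \<in> F1 \<union> F2"
    have "(if g \<in> F1 then c1 g else 0) \<in> A" using F1(3) A0 by simp
    moreover have "(if g \<in> F2 then c2 g else 0) \<in> A" using F2(3) A0 by simp
    ultimately show "c g \<in> A" unfolding c_def by (rule Aadd)
  qed
  moreover have "finite (F1 \<union> F2)" "F1 \<union> F2 \<subseteq> G" using fin F1(2) F2(2) by simp_all
  ultimately show ?thesis unfolding ideal_gen_def using F1 F2 by blast
qed

lemma ideal_gen_mult: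
  assumes Amul: "\<And>x y. x \<in> A \<Longrightarrow> y \<in> A \<Longrightarrow> x * y \<in> A"
    and r: "r \<in> A" and x: "x \<in> ideal_gen A G"
  shows "r * x \<in> ideal_gen A G"
proof -
  obtain F c where F: "finite F" "F \<subseteq> G" "\<forall>g\<in>F. c g \<in> A" "x = (\<Sum>g\<in>F. c g * g)"
    using x unfolding ideal_gen_def by blast
  have e: "r * x = (\<Sum>g\<in>F. (r * c g) * g)" unfolding F(4) sum_distrib_left by (simp add: mult.assoc)
  have c: "\<forall>g\<in>F. r * c g \<in> A" using F(3) r Amul by blast
  have "finite F \<and> F \<subseteq> G \<and> (\<forall>g\<in>F. (\<lambda>g. r * c g) g \<in> A) \<and> r * x = (\<Sum>g\<in>F. (\<lambda>g. r * c g) g * g)"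
    using F(1,2) c e by blast
  then show ?thesis unfolding ideal_gen_def by (intro CollectI exI)
qed

lemma ideal_gen_sum:
  assumes A0: "0 \<in> A" and Aadd: "\<And>x y. x \<in> A \<Longrightarrow> y \<in> A \<Longrightarrow> x + y \<in> A"
  shows "finite F \<Longrightarrow> (\<And>i. i \<in> F \<Longrightarrow> f i \<in> ideal_gen A G) \<Longrightarrow> sum f F \<in> ideal_gen A G"
  by (induction F rule: finite_induct) (auto intro: ideal_gen_add[OF A0 Aadd] ideal_gen_zero)

lemma ideal_gen_sub:
  assumes "G \<subseteq> polys_in V" shows "ideal_gen (polys_in V) G \<subseteq> polys_in V"
proof
  fix x assume "x \<in> ideal_gen (polys_in V) G"
  then obtain F c where F: "finite F" "F \<subseteq> G" "\<forall>g\<in>F. c g \<in> polys_in V" "x = (\<Sum>g\<in>F. c g * g)"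
    unfolding ideal_gen_def by blast
  show "x \<in> polys_in V" unfolding F(4)
  proof (rule Sring_sum[OF F(1)])
    fix g assume "g \<in> F"
    then show "c g * g \<in> polys_in V" using F(2,3) assms by (intro Sring_mult) blast+
  qed
qed

lemma monideal_keys:
  fixes f :: "'k::comm_ring_1 mpoly"
  assumes gs: "\<forall>g\<in>Gs. \<exists>p. g = monom p 1 \<and> Q p" and f: "f \<in> ideal_gen A Gs"
    and a: "\<alpha> \<in> Poly_Mapping.keys f"
  shows "\<exists>p s. Q p \<and> \<alpha> = s + p"
proof (rule ccontr)
  assume nex: "\<not> ?thesis"
  obtain F c where F: "finite F" "F \<subseteq> Gs" "\<forall>g\<in>F. c g \<in> A" "f = (\<Sum>g\<in>F. c g * g)"
    using f unfolding ideal_gen_def by blast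
  have "lk (c g * g) \<alpha> = 0" if "g \<in> F" for g
  proof -
    have "g \<in> Gs" using F(2) that by blast
    then obtain p where p: "g = monom p 1" "Q p" using gs by blast
    have "\<forall>s. \<alpha> \<noteq> s + p" using nex p(2) by blast
    then show ?thesis unfolding p(1) monom_def by (rule lk_mult_single_not)
  qed
  then have "lk f \<alpha> = 0" unfolding F(4) lookup_sum by (intro sum.neutral) blast
  then show False using a by (simp add: in_keys_iff)
qed



section \<open>Monomial rewriting\<close>

definition step :: "(mon \<times> mon) set \<Rightarrow> mon \<Rightarrow> mon \<Rightarrow> bool" where
  "step R w w' \<longleftrightarrow> (\<exists>p q s. (p, q) \<in> R \<and> w = s + p \<and> w' = s + q)"

definition irred :: "(mon \<times> mon) set \<Rightarrow> mon \<Rightarrow> bool" where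
  "irred R w \<longleftrightarrow> \<not> (\<exists>p q. (p, q) \<in> R \<and> mdvd p w)"

definition good :: "nat \<Rightarrow> (mon \<times> mon) set \<Rightarrow> bool" where
  "good m R \<longleftrightarrow> (\<forall>p q. (p, q) \<in> R \<longrightarrow> p \<in> Dm m \<and> q \<in> Dm m \<and> lex_less m q p)"

lemma stepI: "(p, q) \<in> R \<Longrightarrow> step R (s + p) (s + q)"
  unfolding step_def by blast

lemma step_not_irred: "step R w w' \<Longrightarrow> \<not> irred R w"
  unfolding step_def irred_def using mdvd_add by blast

lemma not_irred_step:
  assumes "\<not> irred R w" shows "\<exists>w'. step R w w'"
proof -
  obtain p q where pq: "(p, q) \<in> R" "mdvd p w" using assms unfolding irred_def by blast
  have "w = (w - p) + p" using mdvd_decomp[OF pq(2)] .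
  then have "step R w ((w - p) + q)" using stepI[OF pq(1), of "w - p"] by simp
  then show ?thesis ..
qed

lemma step_less:
  assumes "good m R" "step R w w'" shows "lex_less m w' w"
proof -
  obtain p q s where pq: "(p, q) \<in> R" "w = s + p" "w' = s + q" using assms(2) unfolding step_def by blast
  have "lex_less m q p" using assms(1) pq(1) unfolding good_def by blast
  then show ?thesis unfolding pq(2,3) by (rule lex_less_add)
qed

lemma step_Dm:
  assumes "good m R" "step R w w'" "w \<in> Dm m" shows "w' \<in> Dm m"
proof -
  obtain p q s where pq: "(p, q) \<in> R" "w = s + p" "w' = s + q" using assms(2) unfolding step_def by blast
  have "q \<in> Dm m" using assms(1) pq(1) unfolding good_def by blast
  moreover have "s \<in> Dm m" using assms(3) unfolding pq(2) by simp
  ultimately show ?thesis unfolding pq(3) by simp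
qed

lemma step_shift:
  assumes "step R w w'" shows "step R (t + w) (t + w')"
proof -
  obtain p q s where pq: "(p, q) \<in> R" "w = s + p" "w' = s + q" using assms unfolding step_def by blast
  have "t + w = (t + s) + p" "t + w' = (t + s) + q" unfolding pq(2,3) by (simp_all add: add.assoc)
  then show ?thesis using stepI[OF pq(1), of "t + s"] by simp
qed

lemma steps_Dm:
  assumes "good m R" "(step R)\<^sup>*\<^sup>* w w'" "w \<in> Dm m" shows "w' \<in> Dm m"
  using assms(2,3) by (induction rule: rtranclp_induct) (auto intro: step_Dm[OF assms(1)])

lemma steps_shift:
  assumes "(step R)\<^sup>*\<^sup>* w w'" shows "(step R)\<^sup>*\<^sup>* (t + w) (t + w')"
  using assms
proof (induction rule: rtranclp_induct)
  case base then show ?case by simp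
next
  case (step y z)
  from step.IH step_shift[OF step.hyps(2), of t] show ?case by (rule rtranclp.rtrancl_into_rtrancl)
qed

lemma steps_le:
  assumes "good m R" "(step R)\<^sup>*\<^sup>* w w'" shows "w' = w \<or> lex_less m w' w"
  using assms(2)
proof (induction rule: rtranclp_induct)
  case base then show ?case by simp
next
  case (step y z)
  have "lex_less m z y" using step_less[OF assms(1) step(2)] .
  then show ?case using step(3) lex_less_trans by blast
qed

lemma irred_steps:
  assumes "irred R v" "(step R)\<^sup>*\<^sup>* v v'" shows "v' = v"
  using assms(2)
proof (cases rule: converse_rtranclpE)
  case base then show ?thesis by simp
next
  case (step y)
  then show ?thesis using step_not_irred assms(1) by blast
qed

lemma nf_exists:
  assumes "good m R" "w \<in> Dm m"
  shows "\<exists>v. (step R)\<^sup>*\<^sup>* w v \<and> irred R v"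
  using assms(2)
proof (induction w rule: wf_induct[OF wf_lex[of m]])
  case (1 w)
  show ?case
  proof (cases "irred R w")
    case True then show ?thesis by blast
  next
    case False
    then obtain w' where st: "step R w w'" using not_irred_step by blast
    have "w' \<in> Dm m" using step_Dm[OF assms(1) st 1(2)] .
    moreover have "lex_less m w' w" using step_less[OF assms(1) st] .
    ultimately have "(w', w) \<in> {(\<alpha>, \<beta>). \<alpha> \<in> Dm m \<and> \<beta> \<in> Dm m \<and> lex_less m \<alpha> \<beta>}" using 1(2) by blast
    then obtain v where "(step R)\<^sup>*\<^sup>* w' v" "irred R v" using 1(1) \<open>w' \<in> Dm m\<close> by blast
    then show ?thesis using st by (meson converse_rtranclp_into_rtranclp)
  qed
qed

definition loc_conf :: "nat \<Rightarrow> (mon \<times> mon) set \<Rightarrow> bool" where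
  "loc_conf m R \<longleftrightarrow> (\<forall>w w1 w2. w \<in> Dm m \<longrightarrow> step R w w1 \<longrightarrow> step R w w2 \<longrightarrow>
      (\<exists>v. (step R)\<^sup>*\<^sup>* w1 v \<and> (step R)\<^sup>*\<^sup>* w2 v))"

lemma unique_nf:
  assumes g: "good m R" and lc: "loc_conf m R"
  shows "w \<in> Dm m \<Longrightarrow> (step R)\<^sup>*\<^sup>* w v1 \<Longrightarrow> (step R)\<^sup>*\<^sup>* w v2 \<Longrightarrow> irred R v1 \<Longrightarrow> irred R v2 \<Longrightarrow> v1 = v2"
proof (induction w arbitrary: v1 v2 rule: wf_induct[OF wf_lex[of m]])
  case (1 w)
  show ?case
  proof (cases "irred R w")
    case True
    then show ?thesis using irred_steps 1(3,4) by metis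
  next
    case False
    have w1: "\<exists>w1. step R w w1 \<and> (step R)\<^sup>*\<^sup>* w1 v1"
    proof (rule converse_rtranclpE[OF 1(3)])
      assume "w = v1" then show ?thesis using False 1(5) by simp
    next
      fix y assume "step R w y" "(step R)\<^sup>*\<^sup>* y v1" then show ?thesis by blast
    qed
    have w2: "\<exists>w2. step R w w2 \<and> (step R)\<^sup>*\<^sup>* w2 v2"
    proof (rule converse_rtranclpE[OF 1(4)])
      assume "w = v2" then show ?thesis using False 1(6) by simp
    next
      fix y assume "step R w y" "(step R)\<^sup>*\<^sup>* y v2" then show ?thesis by blast
    qed
    obtain w1 where a1: "step R w w1" "(step R)\<^sup>*\<^sup>* w1 v1" using w1 by blast
    obtain w2 where a2: "step R w w2" "(step R)\<^sup>*\<^sup>* w2 v2" using w2 by blast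
    obtain x where x: "(step R)\<^sup>*\<^sup>* w1 x" "(step R)\<^sup>*\<^sup>* w2 x"
      using lc 1(2) a1(1) a2(1) unfolding loc_conf_def by blast
    have D1: "w1 \<in> Dm m" using step_Dm[OF g a1(1) 1(2)] .
    have D2: "w2 \<in> Dm m" using step_Dm[OF g a2(1) 1(2)] .
    have Dx: "x \<in> Dm m" using steps_Dm[OF g x(1) D1] .
    obtain n where n: "(step R)\<^sup>*\<^sup>* x n" "irred R n" using nf_exists[OF g Dx] by blast
    have r1: "(w1, w) \<in> {(\<alpha>, \<beta>). \<alpha> \<in> Dm m \<and> \<beta> \<in> Dm m \<and> lex_less m \<alpha> \<beta>}"
      using D1 1(2) step_less[OF g a1(1)] by blast
    have r2: "(w2, w) \<in> {(\<alpha>, \<beta>). \<alpha> \<in> Dm m \<and> \<beta> \<in> Dm m \<and> lex_less m \<alpha> \<beta>}"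
      using D2 1(2) step_less[OF g a2(1)] by blast
    have "v1 = n" using 1(1)[rule_format, OF r1 D1 a1(2) rtranclp_trans[OF x(1) n(1)] 1(5) n(2)] .
    moreover have "v2 = n" using 1(1)[rule_format, OF r2 D2 a2(2) rtranclp_trans[OF x(2) n(1)] 1(6) n(2)] .
    ultimately show ?thesis by simp
  qed
qed

section \<open>The class functional\<close>

definition sig :: "mon set \<Rightarrow> ('k::comm_ring_1) mpoly \<Rightarrow> 'k" where
  "sig K f = (\<Sum>\<alpha>\<in>Poly_Mapping.keys f. if \<alpha> \<in> K then lk f \<alpha> else 0)"

lemma sig_superset:
  assumes "finite B" "Poly_Mapping.keys f \<subseteq> B"
  shows "sig K f = (\<Sum>\<alpha>\<in>B. if \<alpha> \<in> K then lk f \<alpha> else 0)"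
  unfolding sig_def
proof (rule sum.mono_neutral_left[OF assms(1) assms(2)])
  show "\<forall>i\<in>B - Poly_Mapping.keys f. (if i \<in> K then lk f i else 0) = 0"
    by (simp add: in_keys_iff)
qed

lemma sig_add: "sig K (f + g) = sig K f + sig K g"
proof -
  let ?B = "Poly_Mapping.keys f \<union> Poly_Mapping.keys g"
  have fin: "finite ?B" by simp
  have "sig K (f + g) = (\<Sum>\<alpha>\<in>?B. if \<alpha> \<in> K then lk (f + g) \<alpha> else 0)"
    using sig_superset[OF fin keys_add] .
  also have "\<dots> = (\<Sum>\<alpha>\<in>?B. (if \<alpha> \<in> K then lk f \<alpha> else 0) + (if \<alpha> \<in> K then lk g \<alpha> else 0))"
    by (intro sum.cong) (simp_all add: lookup_add)
  also have "\<dots> = sig K f + sig K g"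
    unfolding sum.distrib
    using sig_superset[OF fin, of f K] sig_superset[OF fin, of g K] by simp
  finally show ?thesis .
qed

lemma sig_uminus: "sig K (- f) = - sig K f"
  unfolding sig_def by (simp add: keys_minus sum_negf[symmetric] if_distrib[of uminus] cong: if_cong)

lemma sig_diff: "sig K (f - g) = sig K f - sig K g"
proof -
  have "f - g = f + (- g)" by simp
  then show ?thesis using sig_add[of K f "-g"] sig_uminus[of K g] by simp
qed

lemma sig_sum: "finite F \<Longrightarrow> sig K (\<Sum>i\<in>F. h i) = (\<Sum>i\<in>F. sig K (h i))"
  by (induction F rule: finite_induct) (simp add: sig_def, simp add: sig_add)

lemma sig_mult_single:
  fixes c :: "('k::comm_ring_1) mpoly"
  shows "sig K (c * Poly_Mapping.single p 1) = (\<Sum>\<alpha>\<in>Poly_Mapping.keys c. if \<alpha> + p \<in> K then lk c \<alpha> else 0)"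
proof -
  let ?B = "(\<lambda>\<alpha>. \<alpha> + p) ` Poly_Mapping.keys c"
  have sub: "Poly_Mapping.keys (c * Poly_Mapping.single p 1) \<subseteq> ?B"
  proof
    fix \<beta> assume b: "\<beta> \<in> Poly_Mapping.keys (c * Poly_Mapping.single p 1)"
    have "\<beta> \<in> {a + b |a b. a \<in> Poly_Mapping.keys c \<and> b \<in> Poly_Mapping.keys (Poly_Mapping.single p (1::'k))}"
      using keys_mult[of c "Poly_Mapping.single p 1"] b by (rule subsetD)
    then show "\<beta> \<in> ?B" by auto
  qed
  have inj: "inj_on (\<lambda>\<alpha>. \<alpha> + p) (Poly_Mapping.keys c)" by (intro inj_onI) simp
  have "sig K (c * Poly_Mapping.single p 1) = (\<Sum>\<beta>\<in>?B. if \<beta> \<in> K then lk (c * Poly_Mapping.single p 1) \<beta> else 0)"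
    using sig_superset[OF _ sub] by simp
  also have "\<dots> = (\<Sum>\<alpha>\<in>Poly_Mapping.keys c. if \<alpha> + p \<in> K then lk (c * Poly_Mapping.single p 1) (\<alpha> + p) else 0)"
    by (simp add: sum.reindex[OF inj])
  also have "\<dots> = (\<Sum>\<alpha>\<in>Poly_Mapping.keys c. if \<alpha> + p \<in> K then lk c \<alpha> else 0)"
  proof (rule sum.cong[OF refl])
    fix \<alpha>
    show "(if \<alpha> + p \<in> K then lk (c * Poly_Mapping.single p 1) (\<alpha> + p) else 0) = (if \<alpha> + p \<in> K then lk c \<alpha> else 0)"
      using lk_mult_single_shift[of c p "1::'k" \<alpha>] by simp
  qed
  finally show ?thesis .
qed

lemma sig_binom_zero:
  fixes c :: "('k::comm_ring_1) mpoly"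
  assumes "\<And>\<alpha>. \<alpha> \<in> Poly_Mapping.keys c \<Longrightarrow> (\<alpha> + p \<in> K \<longleftrightarrow> \<alpha> + q \<in> K)"
  shows "sig K (c * (monom p 1 - monom q 1)) = 0"
proof -
  have "sig K (c * (monom p 1 - monom q 1)) = sig K (c * Poly_Mapping.single p 1) - sig K (c * Poly_Mapping.single q 1)"
    unfolding monom_def right_diff_distrib sig_diff ..
  also have "\<dots> = 0" unfolding sig_mult_single using assms by (simp cong: sum.cong)
  finally show ?thesis .
qed

theorem lead_reducible:
  fixes f :: "('k::comm_ring_1) mpoly"
  assumes g: "good m R" and lc: "loc_conf m R"
    and G: "\<forall>x\<in>G. \<exists>p q. (p, q) \<in> R \<and> x = monom p 1 - monom q 1"
    and f: "f \<in> ideal_gen (Sring m) G" and fS: "f \<in> Sring m" and f0: "f \<noteq> 0"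
  shows "\<not> irred R (lead_mon m f)"
proof
  let ?u = "lead_mon m f"
  assume iu: "irred R ?u"
  have lm: "?u \<in> Poly_Mapping.keys f" "\<forall>\<beta>\<in>Poly_Mapping.keys f. \<beta> \<noteq> ?u \<longrightarrow> lex_less m \<beta> ?u"
    using lead_mon_prop[OF fS f0] by blast+
  have uD: "?u \<in> Dm m" using Sring_keys[OF fS] lm(1) by blast
  define K where "K = {w. w \<in> Dm m \<and> (step R)\<^sup>*\<^sup>* w ?u}"
  have closed: "\<alpha> + p \<in> K \<longleftrightarrow> \<alpha> + q \<in> K" if "(p, q) \<in> R" "\<alpha> \<in> Dm m" for p q \<alpha>
  proof -
    have pD: "p \<in> Dm m" and qD: "q \<in> Dm m" using g that(1) unfolding good_def by blast+
    have st: "step R (\<alpha> + p) (\<alpha> + q)" using stepI[OF that(1)] .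
    have apD: "\<alpha> + p \<in> Dm m" and aqD: "\<alpha> + q \<in> Dm m" using that(2) pD qD by simp_all
    show ?thesis
    proof
      assume "\<alpha> + p \<in> K"
      then have s1: "(step R)\<^sup>*\<^sup>* (\<alpha> + p) ?u" unfolding K_def by blast
      obtain n where n: "(step R)\<^sup>*\<^sup>* (\<alpha> + q) n" "irred R n" using nf_exists[OF g aqD] by blast
      have "(step R)\<^sup>*\<^sup>* (\<alpha> + p) n" using st n(1) by (rule converse_rtranclp_into_rtranclp)
      then have "n = ?u" using unique_nf[OF g lc apD _ s1 n(2) iu] by blast
      then show "\<alpha> + q \<in> K" unfolding K_def using aqD n(1) by blast
    next
      assume "\<alpha> + q \<in> K"
      then have "(step R)\<^sup>*\<^sup>* (\<alpha> + q) ?u" unfolding K_def by blast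
      with st have "(step R)\<^sup>*\<^sup>* (\<alpha> + p) ?u" by (rule converse_rtranclp_into_rtranclp)
      then show "\<alpha> + p \<in> K" unfolding K_def using apD by blast
    qed
  qed
  obtain F c where F: "finite F" "F \<subseteq> G" "\<forall>x\<in>F. c x \<in> Sring m" "f = (\<Sum>x\<in>F. c x * x)"
    using f unfolding ideal_gen_def by blast
  have z: "sig K (c x * x) = 0" if "x \<in> F" for x
  proof -
    have "x \<in> G" using F(2) that by blast
    then obtain p q where pq: "(p, q) \<in> R" "x = monom p 1 - monom q 1" using G by blast
    have cS: "c x \<in> Sring m" using F(3) that by blast
    have "sig K (c x * (monom p 1 - monom q 1)) = 0"
    proof (rule sig_binom_zero)
      fix \<alpha> assume "\<alpha> \<in> Poly_Mapping.keys (c x)"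
      then have "\<alpha> \<in> Dm m" using Sring_keys[OF cS] by blast
      then show "\<alpha> + p \<in> K \<longleftrightarrow> \<alpha> + q \<in> K" using closed[OF pq(1)] by blast
    qed
    then show ?thesis using pq(2) by simp
  qed
  have s0: "sig K f = 0" unfolding F(4) sig_sum[OF F(1)] using z by simp
  have "sig K f = (\<Sum>\<alpha>\<in>Poly_Mapping.keys f. if \<alpha> = ?u then lk f \<alpha> else 0)"
    unfolding sig_def
  proof (rule sum.cong[OF refl])
    fix \<alpha> assume a: "\<alpha> \<in> Poly_Mapping.keys f"
    show "(if \<alpha> \<in> K then lk f \<alpha> else 0) = (if \<alpha> = ?u then lk f \<alpha> else 0)"
    proof (cases "\<alpha> = ?u")
      case True
      have "?u \<in> K" unfolding K_def using uD by blast
      then show ?thesis using True by simp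
    next
      case False
      have "\<alpha> \<notin> K"
      proof
        assume "\<alpha> \<in> K"
        then have "(step R)\<^sup>*\<^sup>* \<alpha> ?u" unfolding K_def by blast
        then have "?u = \<alpha> \<or> lex_less m ?u \<alpha>" using steps_le[OF g] by blast
        moreover have "lex_less m \<alpha> ?u" using lm(2) a False by blast
        ultimately show False using False lex_less_asym by blast
      qed
      then show ?thesis using False by simp
    qed
  qed
  also have "\<dots> = lk f ?u" using lm(1) by (simp add: sum.delta)
  finally have "lk f ?u = 0" using s0 by simp
  then show False using lm(1) by (simp add: in_keys_iff)
qed



lemma lk_mgcd: "lk (mgcd f g) v = min (lk f v) (lk g v)"
  by (simp add: mgcd.rep_eq)

lemma lk_sum_single_T:
  "lk (\<Sum>l\<in>{1..m}. Poly_Mapping.single (T l) (h l)) v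
     = (case v of T i \<Rightarrow> (if i \<in> {1..m} then h i else 0) | _ \<Rightarrow> 0)"
proof -
  have "lk (\<Sum>l\<in>{1..m}. Poly_Mapping.single (T l) (h l)) v = (\<Sum>l\<in>{1..m}. if T l = v then h l else 0)"
    by (simp add: lookup_sum lookup_single when_def)
  also have "\<dots> = (case v of T i \<Rightarrow> (if i \<in> {1..m} then h i else 0) | _ \<Rightarrow> 0)"
  proof (cases v)
    case (T i)
    have "(\<Sum>l\<in>{1..m}. if T l = v then h l else 0) = (\<Sum>l\<in>{1..m}. if l = i then h l else 0)"
      using T by simp
    also have "\<dots> = (if i \<in> {1..m} then h i else 0)" by (simp add: sum.delta')
    finally show ?thesis using T by simp
  qed simp_all
  finally show ?thesis .
qed

lemma lk_sum_single_X:
  "lk (\<Sum>l\<in>{1..m}. Poly_Mapping.single (X l) (h l)) v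
     = (case v of X i \<Rightarrow> (if i \<in> {1..m} then h i else 0) | _ \<Rightarrow> 0)"
proof -
  have "lk (\<Sum>l\<in>{1..m}. Poly_Mapping.single (X l) (h l)) v = (\<Sum>l\<in>{1..m}. if X l = v then h l else 0)"
    by (simp add: lookup_sum lookup_single when_def)
  also have "\<dots> = (case v of X i \<Rightarrow> (if i \<in> {1..m} then h i else 0) | _ \<Rightarrow> 0)"
  proof (cases v)
    case (X i)
    have "(\<Sum>l\<in>{1..m}. if X l = v then h l else 0) = (\<Sum>l\<in>{1..m}. if l = i then h l else 0)"
      using X by simp
    also have "\<dots> = (if i \<in> {1..m} then h i else 0)" by (simp add: sum.delta')
    finally show ?thesis using X by simp
  qed simp_all
  finally show ?thesis .
qed

lemma lk_psi_T: "lk (psi_exp m a b \<alpha>) (T i) =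
   (if i \<in> {1..m} then lk \<alpha> (T i) + lk \<alpha> (X i) * a i + lk \<alpha> Wv * b i else 0)"
  unfolding psi_exp_def lk_sum_single_T by simp

lemma lk_psi_nonT: "(\<And>i. v \<noteq> T i) \<Longrightarrow> lk (psi_exp m a b \<alpha>) v = 0"
  unfolding psi_exp_def lk_sum_single_T by (cases v) auto

definition zdeg :: "nat \<Rightarrow> mon \<Rightarrow> nat" where
  "zdeg m \<alpha> = lk \<alpha> Wv + (\<Sum>i\<in>{1..m}. lk \<alpha> (X i))"

lemma lk_rees: "lk (rees_exp m a b \<alpha>) v =
   (case v of T i \<Rightarrow> (if i \<in> {1..m} then lk \<alpha> (T i) + lk \<alpha> (X i) * a i + lk \<alpha> Wv * b i else 0)
     | Zv \<Rightarrow> zdeg m \<alpha> | _ \<Rightarrow> 0)"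
  unfolding rees_exp_def lookup_add
  by (cases v) (simp_all add: lk_psi_T lk_psi_nonT lookup_single zdeg_def)

lemma rees_add: "rees_exp m a b (\<alpha> + \<beta>) = rees_exp m a b \<alpha> + rees_exp m a b \<beta>"
  by (intro poly_mapping_eqI)
     (simp add: lk_rees lookup_add zdeg_def sum.distrib algebra_simps split: var.split)

definition pb1 :: "nat \<Rightarrow> (nat \<Rightarrow> nat) \<Rightarrow> (nat \<Rightarrow> nat) \<Rightarrow> mon \<Rightarrow> mon \<Rightarrow> mon" where
  "pb1 m a b \<mu> \<nu> = (psi_exp m a b \<nu> - mgcd (psi_exp m a b \<mu>) (psi_exp m a b \<nu>)) + \<mu>"
definition pb2 :: "nat \<Rightarrow> (nat \<Rightarrow> nat) \<Rightarrow> (nat \<Rightarrow> nat) \<Rightarrow> mon \<Rightarrow> mon \<Rightarrow> mon" where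
  "pb2 m a b \<mu> \<nu> = (psi_exp m a b \<mu> - mgcd (psi_exp m a b \<mu>) (psi_exp m a b \<nu>)) + \<nu>"

lemma Pbin_eq: "Pbin m a b \<mu> \<nu> = monom (pb1 m a b \<mu> \<nu>) 1 - monom (pb2 m a b \<mu> \<nu>) 1"
  unfolding Pbin_def pb1_def pb2_def Let_def ..

lemma lk_pb1_nonT: "(\<And>i. v \<noteq> T i) \<Longrightarrow> lk (pb1 m a b \<mu> \<nu>) v = lk \<mu> v"
  unfolding pb1_def by (simp add: lookup_add lookup_minus lk_mgcd lk_psi_nonT)
lemma lk_pb2_nonT: "(\<And>i. v \<noteq> T i) \<Longrightarrow> lk (pb2 m a b \<mu> \<nu>) v = lk \<nu> v"
  unfolding pb2_def by (simp add: lookup_add lookup_minus lk_mgcd lk_psi_nonT)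
lemma lk_pb1_T: "lk (pb1 m a b \<mu> \<nu>) (T i) =
   lk (psi_exp m a b \<nu>) (T i) - min (lk (psi_exp m a b \<mu>) (T i)) (lk (psi_exp m a b \<nu>) (T i)) + lk \<mu> (T i)"
  unfolding pb1_def by (simp add: lookup_add lookup_minus lk_mgcd)
lemma lk_pb2_T: "lk (pb2 m a b \<mu> \<nu>) (T i) =
   lk (psi_exp m a b \<mu>) (T i) - min (lk (psi_exp m a b \<mu>) (T i)) (lk (psi_exp m a b \<nu>) (T i)) + lk \<nu> (T i)"
  unfolding pb2_def by (simp add: lookup_add lookup_minus lk_mgcd)

lemma psi_keys: "Poly_Mapping.keys (psi_exp m a b \<alpha>) \<subseteq> T ` {1..m}"
proof
  fix v assume "v \<in> Poly_Mapping.keys (psi_exp m a b \<alpha>)"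
  then have "lk (psi_exp m a b \<alpha>) v \<noteq> 0" by (simp add: in_keys_iff)
  then show "v \<in> T ` {1..m}" by (cases v) (auto simp: lk_psi_T lk_psi_nonT split: if_splits)
qed

lemma psi_Dm: "psi_exp m a b \<alpha> \<in> Dm m"
  using psi_keys unfolding Dm_def Svars_def by blast

lemma pb_Dm: "\<mu> \<in> Dm m \<Longrightarrow> \<nu> \<in> Dm m \<Longrightarrow> pb1 m a b \<mu> \<nu> \<in> Dm m \<and> pb2 m a b \<mu> \<nu> \<in> Dm m"
  unfolding pb1_def pb2_def using psi_Dm Dm_minus by simp

lemma rees_pb:
  assumes "zdeg m \<mu> = zdeg m \<nu>"
  shows "rees_exp m a b (pb1 m a b \<mu> \<nu>) = rees_exp m a b (pb2 m a b \<mu> \<nu>)"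
proof (rule poly_mapping_eqI)
  fix v
  have nX: "lk (pb1 m a b \<mu> \<nu>) (X i) = lk \<mu> (X i)" "lk (pb2 m a b \<mu> \<nu>) (X i) = lk \<nu> (X i)" for i
    by (simp_all add: lk_pb1_nonT lk_pb2_nonT)
  have nW: "lk (pb1 m a b \<mu> \<nu>) Wv = lk \<mu> Wv" "lk (pb2 m a b \<mu> \<nu>) Wv = lk \<nu> Wv"
    by (simp_all add: lk_pb1_nonT lk_pb2_nonT)
  have z: "zdeg m (pb1 m a b \<mu> \<nu>) = zdeg m (pb2 m a b \<mu> \<nu>)"
    using assms unfolding zdeg_def nX nW by simp
  show "lk (rees_exp m a b (pb1 m a b \<mu> \<nu>)) v = lk (rees_exp m a b (pb2 m a b \<mu> \<nu>)) v"
  proof (cases v)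
    case (T i)
    show ?thesis unfolding T lk_rees
      by (simp add: nX nW lk_pb1_T lk_pb2_T lk_psi_T min_def)
  next
    case Zv then show ?thesis using z by (simp add: lk_rees)
  qed (simp_all add: lk_rees)
qed

lemma lex_less_pb_W:
  assumes "lk \<nu> Wv < lk \<mu> Wv"
  shows "lex_less m (pb2 m a b \<mu> \<nu>) (pb1 m a b \<mu> \<nu>)"
  unfolding lex_less_def
  by (rule exI[of _ 0]) (simp add: var_rank_def lk_pb1_nonT lk_pb2_nonT assms)

definition xx :: "nat \<Rightarrow> nat \<Rightarrow> mon \<times> mon" where
  "xx i j = (Poly_Mapping.single (X i) 1, Poly_Mapping.single (X j) 1)"
definition wx :: "nat \<Rightarrow> mon \<times> mon" where
  "wx l = (Poly_Mapping.single Wv 1, Poly_Mapping.single (X l) 1)"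
definition pc :: "nat \<Rightarrow> (nat \<Rightarrow> nat) \<Rightarrow> mon \<times> mon" where
  "pc m c = (Wmon (vabs m c), Xmon m c)"

definition rule :: "nat \<Rightarrow> (nat \<Rightarrow> nat) \<Rightarrow> (nat \<Rightarrow> nat) \<Rightarrow> mon \<times> mon \<Rightarrow> mon \<times> mon" where
  "rule m a b pr = (pb1 m a b (fst pr) (snd pr), pb2 m a b (fst pr) (snd pr))"

definition XXs :: "nat \<Rightarrow> (mon \<times> mon) set" where
  "XXs m = {xx i j | i j. 1 \<le> j \<and> j < i \<and> i \<le> m}"
definition WXs :: "nat \<Rightarrow> (mon \<times> mon) set" where
  "WXs m = {wx l | l. l \<in> {1..m}}"

lemma Gamma0_char: "Gamma0 m a b = (\<lambda>pr. Pbin m a b (fst pr) (snd pr)) ` (XXs m \<union> WXs m)"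
proof (rule set_eqI)
  fix g
  show "g \<in> Gamma0 m a b \<longleftrightarrow> g \<in> (\<lambda>pr. Pbin m a b (fst pr) (snd pr)) ` (XXs m \<union> WXs m)"
  proof
    assume "g \<in> Gamma0 m a b"
    then obtain i j where ij: "g = Pbin m a b (Poly_Mapping.single (Xv m i) 1) (Poly_Mapping.single (Xv m j) 1)"
      "1 \<le> j" "j < i" "i \<le> m + 1" unfolding Gamma0_def by blast
    show "g \<in> (\<lambda>pr. Pbin m a b (fst pr) (snd pr)) ` (XXs m \<union> WXs m)"
    proof (cases "i = m + 1")
      case True
      then have "g = Pbin m a b (fst (wx j)) (snd (wx j))" "wx j \<in> WXs m"
        using ij unfolding wx_def Xv_def WXs_def by auto
      then show ?thesis by blast
    next
      case False
      have "xx i j \<in> XXs m" unfolding XXs_def using ij False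
        by (intro CollectI exI[of _ i] exI[of _ j]) simp
      moreover have "g = Pbin m a b (fst (xx i j)) (snd (xx i j))"
        using ij False unfolding xx_def Xv_def by simp
      ultimately have "g = Pbin m a b (fst (xx i j)) (snd (xx i j))" "xx i j \<in> XXs m" by blast+
      then show ?thesis by blast
    qed
  next
    assume "g \<in> (\<lambda>pr. Pbin m a b (fst pr) (snd pr)) ` (XXs m \<union> WXs m)"
    then obtain pr where pr: "pr \<in> XXs m \<union> WXs m" "g = Pbin m a b (fst pr) (snd pr)" by blast
    show "g \<in> Gamma0 m a b"
    proof (cases "pr \<in> XXs m")
      case True
      then obtain i j where "pr = xx i j" "1 \<le> j" "j < i" "i \<le> m" unfolding XXs_def by blast
      then have "g = Pbin m a b (Poly_Mapping.single (Xv m i) 1) (Poly_Mapping.single (Xv m j) 1)"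
        "1 \<le> j" "j < i" "i \<le> m + 1" using pr(2) unfolding xx_def Xv_def by auto
      then show ?thesis unfolding Gamma0_def by blast
    next
      case False
      then obtain l where "pr = wx l" "l \<in> {1..m}" using pr(1) unfolding WXs_def by blast
      then have "g = Pbin m a b (Poly_Mapping.single (Xv m (m+1)) 1) (Poly_Mapping.single (Xv m l) 1)"
        "1 \<le> l" "l < m + 1" "m + 1 \<le> m + 1" using pr(2) unfolding wx_def Xv_def by auto
      then show ?thesis unfolding Gamma0_def by blast
    qed
  qed
qed

lemma lk_Wmon: "lk (Wmon k) v = (if v = Wv then k else 0)"
  by (simp add: Wmon_def lookup_single when_def eq_commute)

lemma lk_Xmon: "lk (Xmon m c) v = (case v of X i \<Rightarrow> (if i \<in> {1..m} then c i else 0) | _ \<Rightarrow> 0)"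
  unfolding Xmon_def lk_sum_single_X ..

lemma lk_sX: "lk (Poly_Mapping.single (X i) (k::nat)) v = (if v = X i then k else 0)"
  by (simp add: lookup_single when_def eq_commute)
lemma lk_sW: "lk (Poly_Mapping.single Wv (k::nat)) v = (if v = Wv then k else 0)"
  by (simp add: lookup_single when_def eq_commute)



lemma sX_Dm: "i \<in> {1..m} \<Longrightarrow> Poly_Mapping.single (X i) k \<in> Dm m"
  by (simp add: Dm_def Svars_def)
lemma sW_Dm: "Poly_Mapping.single Wv k \<in> Dm m"
  by (simp add: Dm_def Svars_def)
lemma Wmon_Dm: "Wmon k \<in> Dm m"
  by (simp add: Dm_def Svars_def Wmon_def)
lemma Xmon_Dm: "Xmon m c \<in> Dm m"
proof -
  have "Poly_Mapping.keys (Xmon m c) \<subseteq> Svars m"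
  proof
    fix v assume "v \<in> Poly_Mapping.keys (Xmon m c)"
    then have "lk (Xmon m c) v \<noteq> 0" by (simp add: in_keys_iff)
    then show "v \<in> Svars m" by (cases v) (auto simp: lk_Xmon Svars_def split: if_splits)
  qed
  then show ?thesis by (simp add: Dm_def)
qed

lemma zdeg_sX: "i \<in> {1..m} \<Longrightarrow> zdeg m (Poly_Mapping.single (X i) k) = k"
  unfolding zdeg_def lk_sX by (simp add: sum.delta')
lemma zdeg_sW: "zdeg m (Poly_Mapping.single Wv k) = k"
  unfolding zdeg_def lk_sW by simp
lemma zdeg_Wmon: "zdeg m (Wmon k) = k"
  unfolding zdeg_def lk_Wmon by simp
lemma zdeg_Xmon: "zdeg m (Xmon m c) = vabs m c"
  unfolding zdeg_def lk_Xmon vabs_def by simp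

context
  fixes m :: nat and a b :: "nat \<Rightarrow> nat" and i j :: nat
  assumes ij: "1 \<le> j" "j < i" "i \<le> m"
begin

private abbreviation "xmu \<equiv> Poly_Mapping.single (X i) (Suc 0)"
private abbreviation "xnu \<equiv> Poly_Mapping.single (X j) (Suc 0)"

lemma xx_Dm: "pb1 m a b xmu xnu \<in> Dm m \<and> pb2 m a b xmu xnu \<in> Dm m"
  using ij by (intro pb_Dm sX_Dm) auto

lemma xx_rees: "rees_exp m a b (pb1 m a b xmu xnu) = rees_exp m a b (pb2 m a b xmu xnu)"
  using ij by (intro rees_pb) (simp add: zdeg_sX)

lemma xx_W: "lk (pb1 m a b xmu xnu) Wv = 0" "lk (pb2 m a b xmu xnu) Wv = 0"
  by (simp_all add: lk_pb1_nonT lk_pb2_nonT lk_sX)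

lemma xx_X: "lk (pb1 m a b xmu xnu) (X r) = (if r = i then 1 else 0)"
            "lk (pb2 m a b xmu xnu) (X r) = (if r = j then 1 else 0)"
  by (simp_all add: lk_pb1_nonT lk_pb2_nonT lk_sX)

lemma xx_q: "a i \<le> lk (pb2 m a b xmu xnu) (T i)"
  using ij by (simp add: lk_pb2_T lk_psi_T lk_sX)

lemma xx_p: "lk (pb1 m a b xmu xnu) (T j) = a j"
  using ij by (simp add: lk_pb1_T lk_psi_T lk_sX)

lemma xx_lex: "lex_less m (pb2 m a b xmu xnu) (pb1 m a b xmu xnu)"
  unfolding lex_less_def
proof (intro exI[of _ "m + 1 - i"] conjI allI impI)
  fix k assume k: "k < m + 1 - i"
  show "lk (pb2 m a b xmu xnu) (var_rank m k) = lk (pb1 m a b xmu xnu) (var_rank m k)"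
  proof (cases "k = 0")
    case True then show ?thesis by (simp add: var_rank_def xx_W)
  next
    case False
    have "k \<le> m" using k ij by linarith
    then have "var_rank m k = X (m + 1 - k)" using False by (simp add: var_rank_def)
    moreover have "m + 1 - k \<noteq> i" "m + 1 - k \<noteq> j" using k ij False by auto
    ultimately show ?thesis by (simp add: xx_X)
  qed
next
  have "var_rank m (m + 1 - i) = X i" using ij by (simp add: var_rank_def)
  then show "lk (pb2 m a b xmu xnu) (var_rank m (m + 1 - i)) < lk (pb1 m a b xmu xnu) (var_rank m (m + 1 - i))"
    using ij by (simp add: xx_X)
qed

end

definition wxlead :: "(nat \<Rightarrow> nat) \<Rightarrow> (nat \<Rightarrow> nat) \<Rightarrow> nat \<Rightarrow> mon" where
  "wxlead a b l = Poly_Mapping.single Wv 1 + Poly_Mapping.single (T l) (a l - b l)"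

context
  fixes m :: nat and a b :: "nat \<Rightarrow> nat" and l :: nat
  assumes l: "l \<in> {1..m}" and ab: "b l < a l"
begin

private abbreviation "wmu \<equiv> Poly_Mapping.single Wv (Suc 0)"
private abbreviation "wnu \<equiv> Poly_Mapping.single (X l) (Suc 0)"

lemma wx_Dm: "pb1 m a b wmu wnu \<in> Dm m \<and> pb2 m a b wmu wnu \<in> Dm m"
  using l by (intro pb_Dm sX_Dm sW_Dm) auto

lemma wx_rees: "rees_exp m a b (pb1 m a b wmu wnu) = rees_exp m a b (pb2 m a b wmu wnu)"
  using l by (intro rees_pb) (simp add: zdeg_sX zdeg_sW)

lemma wx_W: "lk (pb1 m a b wmu wnu) Wv = 1" "lk (pb2 m a b wmu wnu) Wv = 0"
  by (simp_all add: lk_pb1_nonT lk_pb2_nonT lk_sX lk_sW)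

lemma wx_lex: "lex_less m (pb2 m a b wmu wnu) (pb1 m a b wmu wnu)"
  by (rule lex_less_pb_W) (simp add: lk_sX lk_sW)

lemma wx_lead: "pb1 m a b wmu wnu = wxlead a b l"
proof (rule poly_mapping_eqI)
  fix v
  show "lk (pb1 m a b wmu wnu) v = lk (wxlead a b l) v"
  proof (cases v)
    case (T r)
    show ?thesis unfolding T using l ab
      by (cases "r = l") (simp_all add: lk_pb1_T lk_psi_T lk_sX lk_sW wxlead_def lookup_add lookup_single when_def)
  qed (simp_all add: lk_pb1_nonT lk_sW wxlead_def lookup_add lookup_single when_def)
qed

end

lemma lk_wxlead: "lk (wxlead a b l) v = (if v = Wv then 1 else if v = T l then a l - b l else 0)"
  by (simp add: wxlead_def lookup_add lookup_single when_def)

context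
  fixes m :: nat and a b :: "nat \<Rightarrow> nat" and c :: "nat \<Rightarrow> nat"
  assumes c: "1 \<le> vabs m c"
begin

private abbreviation "pmu \<equiv> Wmon (vabs m c)"
private abbreviation "pnu \<equiv> Xmon m c"

lemma pc_Dm: "pb1 m a b pmu pnu \<in> Dm m \<and> pb2 m a b pmu pnu \<in> Dm m"
  by (intro pb_Dm Wmon_Dm Xmon_Dm)

lemma pc_rees: "rees_exp m a b (pb1 m a b pmu pnu) = rees_exp m a b (pb2 m a b pmu pnu)"
  by (intro rees_pb) (simp add: zdeg_Xmon zdeg_Wmon)

lemma pc_W: "lk (pb1 m a b pmu pnu) Wv = vabs m c" "lk (pb2 m a b pmu pnu) Wv = 0"
  by (simp_all add: lk_pb1_nonT lk_pb2_nonT lk_Wmon lk_Xmon)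

lemma pc_X: "lk (pb1 m a b pmu pnu) (X r) = 0"
  by (simp add: lk_pb1_nonT lk_Wmon)

lemma pc_lex: "lex_less m (pb2 m a b pmu pnu) (pb1 m a b pmu pnu)"
  using c by (intro lex_less_pb_W) (simp add: lk_Wmon lk_Xmon)

end



lemma steps_wdeg:
  assumes H2: "\<forall>p q. (p, q) \<in> R \<longrightarrow> lk q Wv = 0" and st: "(step R)\<^sup>*\<^sup>* w w'"
  shows "lk w' Wv \<le> lk w Wv"
  using st
proof (induction rule: rtranclp_induct)
  case base then show ?case by simp
next
  case (step y z)
  obtain p q s where pq: "(p, q) \<in> R" "y = s + p" "z = s + q" using step(2) unfolding step_def by blast
  have "lk z Wv = lk s Wv" using H2 pq(1) unfolding pq(3) by (simp add: lookup_add)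
  also have "\<dots> \<le> lk y Wv" unfolding pq(2) by (simp add: lookup_add)
  finally show ?case using step(3) by simp
qed

lemma steps_rees:
  assumes H: "\<forall>p q. (p, q) \<in> R \<longrightarrow> rees_exp m a b p = rees_exp m a b q" and st: "(step R)\<^sup>*\<^sup>* w w'"
  shows "rees_exp m a b w' = rees_exp m a b w"
  using st
proof (induction rule: rtranclp_induct)
  case base then show ?case by simp
next
  case (step y z)
  obtain p q s where pq: "(p, q) \<in> R" "y = s + p" "z = s + q" using step(2) unfolding step_def by blast
  have "rees_exp m a b z = rees_exp m a b y" using H pq(1) unfolding pq(2,3) rees_add by simp
  then show ?case using step(3) by simp
qed

lemma mdvd_wxlead:
  assumes "1 \<le> lk y Wv" "a i - b i \<le> lk y (T i)"
  shows "mdvd (wxlead a b i) y"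
  unfolding mdvd_def lk_wxlead using assms by simp

definition KLhyps :: "(nat \<Rightarrow> nat) \<Rightarrow> (nat \<Rightarrow> nat) \<Rightarrow> nat \<Rightarrow> (mon \<times> mon) set \<Rightarrow> (mon \<times> mon) set \<Rightarrow> bool" where
  "KLhyps a b K Rj RN \<longleftrightarrow> (\<forall>p q. (p, q) \<in> Rj \<longrightarrow> lk q Wv = 0) \<and>
     (\<forall>p q. (p, q) \<in> RN \<longrightarrow> (p, q) \<notin> Rj \<longrightarrow> K \<le> lk p Wv) \<and>
     (\<forall>p q. (p, q) \<in> Rj \<longrightarrow> lk p Wv = 0 \<longrightarrow> (\<exists>i. a i \<le> lk q (T i) \<and> (\<exists>q'. (wxlead a b i, q') \<in> Rj))) \<and>
     1 \<le> K"

lemma key_lemma: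
  assumes H: "KLhyps a b K Rj RN"
    and c1: "(step Rj)\<^sup>*\<^sup>* l x" and c2: "step Rj x y" and lW: "lk l Wv \<le> K" and irr: "irred Rj y"
  shows "irred RN y"
  unfolding irred_def
proof
  assume "\<exists>p q. (p, q) \<in> RN \<and> mdvd p y"
  then obtain p q where pq: "(p, q) \<in> RN" "mdvd p y" by blast
  have H2: "\<forall>p q. (p, q) \<in> Rj \<longrightarrow> lk q Wv = 0"
    and H1: "\<forall>p q. (p, q) \<in> RN \<longrightarrow> (p, q) \<notin> Rj \<longrightarrow> K \<le> lk p Wv"
    and H3: "\<forall>p q. (p, q) \<in> Rj \<longrightarrow> lk p Wv = 0 \<longrightarrow> (\<exists>i. a i \<le> lk q (T i) \<and> (\<exists>q'. (wxlead a b i, q') \<in> Rj))"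
    and K1: "1 \<le> K" using H unfolding KLhyps_def by blast+
  have "(p, q) \<notin> Rj" using irr pq(2) unfolding irred_def by blast
  then have Kp: "K \<le> lk p Wv" using H1 pq(1) by blast
  have "lk p Wv \<le> lk y Wv" using pq(2) unfolding mdvd_def by blast
  then have Ky: "K \<le> lk y Wv" using Kp by linarith
  obtain p1 q1 s where p1: "(p1, q1) \<in> Rj" "x = s + p1" "y = s + q1" using c2 unfolding step_def by blast
  have yW: "lk y Wv = lk s Wv" using H2 p1(1) unfolding p1(3) by (simp add: lookup_add)
  have "lk x Wv \<le> lk l Wv" using steps_wdeg[OF H2 c1] .
  then have "lk s Wv + lk p1 Wv \<le> K" using lW unfolding p1(2) by (simp add: lookup_add)
  then have "lk p1 Wv = 0" using Ky yW by linarith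
  then obtain i q' where i: "a i \<le> lk q1 (T i)" "(wxlead a b i, q') \<in> Rj" using H3 p1(1) by blast
  have "a i \<le> lk y (T i)" using i(1) unfolding p1(3) by (simp add: lookup_add)
  then have "mdvd (wxlead a b i) y" using Ky K1 by (intro mdvd_wxlead) simp_all
  then show False using irr i(2) unfolding irred_def by blast
qed

lemma max_decomp: "(p1::mon) + (p2 - p1) = p2 + (p1 - p2)"
  by (intro poly_mapping_eqI) (simp add: lookup_add lookup_minus)

lemma loc_conf_lemma:
  assumes g: "good m Rj" and H: "KLhyps a b K Rj RN"
    and Wb: "\<forall>p q. (p, q) \<in> Rj \<longrightarrow> lk p Wv \<le> K"
    and reesR: "\<forall>p q. (p, q) \<in> Rj \<longrightarrow> rees_exp m a b p = rees_exp m a b q"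
    and UNF: "\<forall>v1 v2. v1 \<in> Dm m \<longrightarrow> v2 \<in> Dm m \<longrightarrow> rees_exp m a b v1 = rees_exp m a b v2
               \<longrightarrow> irred RN v1 \<longrightarrow> irred RN v2 \<longrightarrow> v1 = v2"
  shows "loc_conf m Rj"
  unfolding loc_conf_def
proof (intro allI impI)
  fix w w1 w2 assume wD: "w \<in> Dm m" and s1: "step Rj w w1" and s2: "step Rj w w2"
  obtain p1 q1 t1 where r1: "(p1, q1) \<in> Rj" "w = t1 + p1" "w1 = t1 + q1" using s1 unfolding step_def by blast
  obtain p2 q2 t2 where r2: "(p2, q2) \<in> Rj" "w = t2 + p2" "w2 = t2 + q2" using s2 unfolding step_def by blast
  define l where "l = p1 + (p2 - p1)"
  have l2: "l = p2 + (p1 - p2)" unfolding l_def by (rule max_decomp)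
  define l1 where "l1 = (p2 - p1) + q1"
  define l2' where "l2' = (p1 - p2) + q2"
  have st1: "step Rj l l1" unfolding l_def l1_def using stepI[OF r1(1), of "p2 - p1"] by (simp add: add.commute)
  have st2: "step Rj l l2'" unfolding l2 l2'_def using stepI[OF r2(1), of "p1 - p2"] by (simp add: add.commute)
  have p1D: "p1 \<in> Dm m" and p2D: "p2 \<in> Dm m" using g r1(1) r2(1) unfolding good_def by blast+
  have lD: "l \<in> Dm m" unfolding l_def using p1D Dm_minus[OF p2D] by simp
  have l1D: "l1 \<in> Dm m" using step_Dm[OF g st1 lD] .
  have l2D: "l2' \<in> Dm m" using step_Dm[OF g st2 lD] .
  have wb1: "lk p1 Wv \<le> K" and wb2: "lk p2 Wv \<le> K" using Wb r1(1) r2(1) by blast+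
  have "lk l Wv = lk p1 Wv + (lk p2 Wv - lk p1 Wv)" unfolding l_def by (simp add: lookup_add lookup_minus)
  then have lW: "lk l Wv \<le> K" using wb1 wb2 by linarith
  obtain v1 where v1: "(step Rj)\<^sup>*\<^sup>* l1 v1" "irred Rj v1" using nf_exists[OF g l1D] by blast
  obtain v2 where v2: "(step Rj)\<^sup>*\<^sup>* l2' v2" "irred Rj v2" using nf_exists[OF g l2D] by blast
  have irrN: "irred RN v" if st: "step Rj l l'" and ch: "(step Rj)\<^sup>*\<^sup>* l' v" and iv: "irred Rj v" for l' v
  proof (rule rtranclp.cases[OF ch])
    fix a0 assume e: "l' = a0" "v = a0"
    then have lv: "l' = v" by simp
    then have "irred Rj l'" using iv by simp
    then have "irred RN l'" using key_lemma[OF H rtranclp.rtrancl_refl st lW] by blast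
    then show ?thesis using lv by simp
  next
    fix a0 y c0 assume e: "l' = a0" "v = c0" and a1: "(step Rj)\<^sup>*\<^sup>* a0 y" and a2: "step Rj y c0"
    have "(step Rj)\<^sup>*\<^sup>* l y" using st a1 e(1) by (simp add: converse_rtranclp_into_rtranclp)
    then show ?thesis using key_lemma[OF H _ a2 lW] iv e(2) by blast
  qed
  have n1: "irred RN v1" using irrN[OF st1 v1] .
  have n2: "irred RN v2" using irrN[OF st2 v2] .
  have rv1: "rees_exp m a b v1 = rees_exp m a b l"
    using steps_rees[OF reesR v1(1)] steps_rees[OF reesR r_into_rtranclp[of "step Rj", OF st1]] by simp
  have rv2: "rees_exp m a b v2 = rees_exp m a b l"
    using steps_rees[OF reesR v2(1)] steps_rees[OF reesR r_into_rtranclp[of "step Rj", OF st2]] by simp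
  have v1D: "v1 \<in> Dm m" using steps_Dm[OF g v1(1) l1D] .
  have v2D: "v2 \<in> Dm m" using steps_Dm[OF g v2(1) l2D] .
  have v12: "v1 = v2" using UNF v1D v2D rv1 rv2 n1 n2 by simp
  have ml: "mdvd l w"
    unfolding mdvd_def l_def r1(2)
  proof
    fix v
    have e1: "lk w v = lk t1 v + lk p1 v" "lk w v = lk t2 v + lk p2 v"
      using arg_cong[OF r1(2), of "\<lambda>u. lk u v"] arg_cong[OF r2(2), of "\<lambda>u. lk u v"] by (simp_all add: lookup_add)
    have "lk (p1 + (p2 - p1)) v = lk p1 v + (lk p2 v - lk p1 v)" by (simp add: lookup_add lookup_minus)
    also have "\<dots> \<le> lk w v" using e1 by linarith
    finally show "lk (p1 + (p2 - p1)) v \<le> lk (t1 + p1) v" using r1(2) by simp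
  qed
  define s where "s = w - l"
  have ws: "w = s + l" unfolding s_def using mdvd_decomp[OF ml] .
  have w1s: "w1 = s + l1"
  proof (rule poly_mapping_eqI)
    fix v
    have e1: "lk w v = lk t1 v + lk p1 v" "lk w v = lk t2 v + lk p2 v"
      using arg_cong[OF r1(2), of "\<lambda>u. lk u v"] arg_cong[OF r2(2), of "\<lambda>u. lk u v"] by (simp_all add: lookup_add)
    have "lk (s + l1) v = (lk w v - (lk p1 v + (lk p2 v - lk p1 v))) + ((lk p2 v - lk p1 v) + lk q1 v)"
      unfolding s_def l_def l1_def by (simp add: lookup_add lookup_minus)
    also have "\<dots> = lk t1 v + lk q1 v" using e1 by linarith
    finally show "lk w1 v = lk (s + l1) v" unfolding r1(3) by (simp add: lookup_add)
  qed
  have w2s: "w2 = s + l2'"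
  proof (rule poly_mapping_eqI)
    fix v
    have e1: "lk w v = lk t1 v + lk p1 v" "lk w v = lk t2 v + lk p2 v"
      using arg_cong[OF r1(2), of "\<lambda>u. lk u v"] arg_cong[OF r2(2), of "\<lambda>u. lk u v"] by (simp_all add: lookup_add)
    have "lk (s + l2') v = (lk w v - (lk p2 v + (lk p1 v - lk p2 v))) + ((lk p1 v - lk p2 v) + lk q2 v)"
      unfolding s_def l2 l2'_def by (simp add: lookup_add lookup_minus)
    also have "\<dots> = lk t2 v + lk q2 v" using e1 by linarith
    finally show "lk w2 v = lk (s + l2') v" unfolding r2(3) by (simp add: lookup_add)
  qed
  have "(step Rj)\<^sup>*\<^sup>* w1 (s + v1)" unfolding w1s by (rule steps_shift[OF v1(1)])
  moreover have "(step Rj)\<^sup>*\<^sup>* w2 (s + v1)" unfolding w2s v12 by (rule steps_shift[OF v2(1)])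
  ultimately show "\<exists>v. (step Rj)\<^sup>*\<^sup>* w1 v \<and> (step Rj)\<^sup>*\<^sup>* w2 v" by blast
qed



lemma rule_xx: "rule m a b (xx i j) = (pb1 m a b (Poly_Mapping.single (X i) (Suc 0)) (Poly_Mapping.single (X j) (Suc 0)),
                                    pb2 m a b (Poly_Mapping.single (X i) (Suc 0)) (Poly_Mapping.single (X j) (Suc 0)))"
  by (simp add: rule_def xx_def)
lemma rule_wx: "rule m a b (wx l) = (pb1 m a b (Poly_Mapping.single Wv (Suc 0)) (Poly_Mapping.single (X l) (Suc 0)),
                                   pb2 m a b (Poly_Mapping.single Wv (Suc 0)) (Poly_Mapping.single (X l) (Suc 0)))"
  by (simp add: rule_def wx_def)
lemma rule_pc: "rule m a b (pc m c) = (pb1 m a b (Wmon (vabs m c)) (Xmon m c), pb2 m a b (Wmon (vabs m c)) (Xmon m c))"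
  by (simp add: rule_def pc_def)

definition basic :: "nat \<Rightarrow> (nat \<Rightarrow> nat) \<Rightarrow> (nat \<Rightarrow> nat) \<Rightarrow> mon \<times> mon \<Rightarrow> bool" where
  "basic m a b r \<longleftrightarrow> fst r \<in> Dm m \<and> snd r \<in> Dm m \<and> lex_less m (snd r) (fst r) \<and>
     rees_exp m a b (fst r) = rees_exp m a b (snd r) \<and> lk (snd r) Wv = 0"

lemma XXs_facts:
  assumes "pr \<in> XXs m"
  shows "basic m a b (rule m a b pr) \<and> lk (fst (rule m a b pr)) Wv = 0 \<and>
         (\<exists>i\<in>{1..m}. a i \<le> lk (snd (rule m a b pr)) (T i)) \<and>
         (\<exists>j\<in>{1..m}. lk (fst (rule m a b pr)) (T j) = a j)"
proof -
  obtain i j where ij: "pr = xx i j" "1 \<le> j" "j < i" "i \<le> m" using assms unfolding XXs_def by blast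
  have ij': "i \<in> {1..m}" "j \<in> {1..m}" using ij by auto
  note F = xx_Dm[where m=m and a=a and b=b and i=i and j=j, OF ij(2-4)] xx_lex[where m=m and a=a and b=b and i=i and j=j, OF ij(2-4)] xx_rees[where m=m and a=a and b=b and i=i and j=j, OF ij(2-4)] xx_W[where m=m and a=a and b=b and i=i and j=j, OF ij(2-4)]
     xx_q[where m=m and a=a and b=b and i=i and j=j, OF ij(2-4)] xx_p[where m=m and a=a and b=b and i=i and j=j, OF ij(2-4)]
  have b: "basic m a b (rule m a b pr)" unfolding ij(1) rule_xx basic_def fst_conv snd_conv using F by blast
  have w: "lk (fst (rule m a b pr)) Wv = 0" unfolding ij(1) rule_xx fst_conv using F by blast
  have q: "\<exists>i\<in>{1..m}. a i \<le> lk (snd (rule m a b pr)) (T i)" unfolding ij(1) rule_xx snd_conv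
    using F(6) ij'(1) by blast
  have p: "\<exists>j\<in>{1..m}. lk (fst (rule m a b pr)) (T j) = a j" unfolding ij(1) rule_xx fst_conv
    using F(7) ij'(2) by blast
  show ?thesis using b w q p by blast
qed

lemma WXs_facts:
  assumes "pr \<in> WXs m" and ab: "\<forall>i\<in>{1..m}. b i < a i"
  shows "basic m a b (rule m a b pr) \<and> lk (fst (rule m a b pr)) Wv = 1 \<and>
         (\<forall>r. lk (fst (rule m a b pr)) (X r) = 0) \<and> (\<exists>l\<in>{1..m}. fst (rule m a b pr) = wxlead a b l)"
proof -
  obtain l where l: "pr = wx l" "l \<in> {1..m}" using assms unfolding WXs_def by blast
  have bl: "b l < a l" using ab l(2) by blast
  have X0: "lk (fst (rule m a b pr)) (X r) = 0" for r
    unfolding l(1) rule_wx fst_conv wx_lead[where m=m and a=a and b=b and l=l, OF l(2) bl] lk_wxlead by simp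
  show ?thesis unfolding basic_def using X0
    unfolding l(1) rule_wx fst_conv snd_conv
    using wx_Dm[where m=m and a=a and b=b and l=l, OF l(2) bl] wx_lex[where m=m and a=a and b=b and l=l, OF l(2) bl] wx_rees[where m=m and a=a and b=b and l=l, OF l(2) bl] wx_W[where m=m and a=a and b=b and l=l, OF l(2) bl] wx_lead[where m=m and a=a and b=b and l=l, OF l(2) bl] l(2)
    by blast
qed

lemma pc_facts:
  assumes "1 \<le> vabs m c"
  shows "basic m a b (rule m a b (pc m c)) \<and> lk (fst (rule m a b (pc m c))) Wv = vabs m c \<and>
         (\<forall>r. lk (fst (rule m a b (pc m c))) (X r) = 0)"
  unfolding rule_pc basic_def fst_conv snd_conv
  using pc_Dm[where m=m and a=a and b=b and c=c, OF assms] pc_lex[where m=m and a=a and b=b and c=c, OF assms] pc_rees[where m=m and a=a and b=b and c=c, OF assms] pc_W[where m=m and a=a and b=b and c=c, OF assms] pc_X[where m=m and a=a and b=b and c=c, OF assms]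
  by blast

lemma Pbin_rule: "Pbin m a b (fst pr) (snd pr) = monom (fst (rule m a b pr)) 1 - monom (snd (rule m a b pr)) 1"
  unfolding rule_def Pbin_eq by simp

lemma lead_Pbin:
  assumes "basic m a b (rule m a b pr)"
  shows "lead_mon m (Pbin m a b (fst pr) (snd pr) :: 'k::comm_ring_1 mpoly) = fst (rule m a b pr)"
    and "Pbin m a b (fst pr) (snd pr) \<noteq> (0 :: 'k mpoly)"
    and "Pbin m a b (fst pr) (snd pr) \<in> (Sring m :: 'k mpoly set)"
proof -
  have d: "fst (rule m a b pr) \<in> Dm m" "snd (rule m a b pr) \<in> Dm m"
     "lex_less m (snd (rule m a b pr)) (fst (rule m a b pr))" using assms unfolding basic_def by blast+
  have ne: "fst (rule m a b pr) \<noteq> snd (rule m a b pr)" using d(3) lex_less_irrefl by metis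
  show "lead_mon m (Pbin m a b (fst pr) (snd pr) :: 'k::comm_ring_1 mpoly) = fst (rule m a b pr)"
    unfolding Pbin_rule using lead_mon_binom[OF d] .
  show "Pbin m a b (fst pr) (snd pr) \<noteq> (0 :: 'k mpoly)" unfolding Pbin_rule using binom_nonzero[OF ne] .
  show "Pbin m a b (fst pr) (snd pr) \<in> (Sring m :: 'k mpoly set)" unfolding Pbin_rule using binom_Sring[OF d(1,2)] .
qed

section \<open>Uniqueness of normal forms from the Groebner basis hypothesis\<close>

lemma mon_map_binom:
  assumes "p \<noteq> q" "\<phi> p = \<phi> q"
  shows "mon_map \<phi> (monom p 1 - monom q (1::'k::comm_ring_1)) = 0"
proof -
  have "mon_map \<phi> (monom p 1 - monom q (1::'k)) =
        (\<Sum>\<alpha>\<in>{p, q}. monom (\<phi> \<alpha>) (lk (monom p 1 - monom q (1::'k)) \<alpha>))"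
    unfolding mon_map_def binom_keys[OF assms(1)] ..
  also have "\<dots> = monom (\<phi> p) 1 + monom (\<phi> q) (-1)"
    using assms(1) by (simp add: binom_lookup[OF assms(1)])
  also have "\<dots> = 0" unfolding monom_def assms(2) single_add[symmetric] by simp
  finally show ?thesis .
qed

lemma unf_aux:
  assumes GB: "groebner_basis m GN (Lideal m a b :: ('k::comm_ring_1) mpoly set)"
    and leads: "\<forall>g\<in>GN. g \<noteq> 0 \<longrightarrow> (\<exists>q. (lead_mon m g, q) \<in> RN)"
    and v: "v1 \<in> Dm m" "v2 \<in> Dm m" "rees_exp m a b v1 = rees_exp m a b v2" "lex_less m v2 v1"
  shows "\<not> irred RN v1"
proof -
  have ne: "v1 \<noteq> v2" using v(4) lex_less_irrefl by metis
  define f where "f = monom v1 1 - monom v2 (1::'k)"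
  have fS: "f \<in> Sring m" unfolding f_def using binom_Sring[OF v(1,2)] .
  have fL: "f \<in> Lideal m a b" unfolding Lideal_def rees_map_def f_def
    using fS mon_map_binom[OF ne v(3)] unfolding f_def by simp
  have f0: "f \<noteq> 0" unfolding f_def using binom_nonzero[OF ne] .
  have lf: "lead_mon m f = v1" unfolding f_def using lead_mon_binom[OF v(1,2,4)] .
  have "init m f \<in> {init m p | p. p \<in> Lideal m a b \<and> p \<noteq> 0}" using fL f0 by blast
  then have "1 * init m f \<in> init_ideal m (Lideal m a b)"
    unfolding init_ideal_def by (rule ideal_gen_gen) (rule Sring_one)
  then have "monom v1 1 \<in> ideal_gen (Sring m) {init m g | g. g \<in> GN \<and> g \<noteq> 0}"
    using GB unfolding groebner_basis_def init_def lf by simp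
  moreover have "v1 \<in> Poly_Mapping.keys (monom v1 (1::'k))" by (simp add: monom_def)
  moreover have "\<forall>x\<in>{init m g | g. g \<in> GN \<and> g \<noteq> 0}. \<exists>p. x = monom p 1 \<and> (\<exists>g\<in>GN. g \<noteq> 0 \<and> p = lead_mon m g)"
    unfolding init_def by blast
  ultimately have "\<exists>p s. (\<exists>g\<in>GN. g \<noteq> 0 \<and> p = lead_mon m g) \<and> v1 = s + p"
    by (intro monideal_keys[where Q="\<lambda>p. \<exists>g\<in>GN. g \<noteq> 0 \<and> p = lead_mon m g"])
  then obtain p s where ps: "\<exists>g\<in>GN. g \<noteq> 0 \<and> p = lead_mon m g" "v1 = s + p" by blast
  obtain q where "(p, q) \<in> RN" using ps(1) leads by blast
  moreover have "mdvd p v1" unfolding ps(2) by (rule mdvd_add)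
  ultimately show ?thesis unfolding irred_def by blast
qed

lemma unf_lemma:
  assumes GB: "groebner_basis m GN (Lideal m a b :: ('k::comm_ring_1) mpoly set)"
    and leads: "\<forall>g\<in>GN. g \<noteq> 0 \<longrightarrow> (\<exists>q. (lead_mon m g, q) \<in> RN)"
  shows "\<forall>v1 v2. v1 \<in> Dm m \<longrightarrow> v2 \<in> Dm m \<longrightarrow> rees_exp m a b v1 = rees_exp m a b v2
               \<longrightarrow> irred RN v1 \<longrightarrow> irred RN v2 \<longrightarrow> v1 = v2"
proof (intro allI impI)
  fix v1 v2 assume v: "v1 \<in> Dm m" "v2 \<in> Dm m" "rees_exp m a b v1 = rees_exp m a b v2"
    and i: "irred RN v1" "irred RN v2"
  show "v1 = v2"
  proof (rule ccontr)
    assume "v1 \<noteq> v2"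
    then consider "lex_less m v1 v2" | "lex_less m v2 v1" using lex_less_total[OF v(1,2)] by blast
    then show False
    proof cases
      case 1 then show False using unf_aux[OF GB leads v(2) v(1) v(3)[symmetric]] i(2) by blast
    next
      case 2 then show False using unf_aux[OF GB leads v(1) v(2) v(3)] i(1) by blast
    qed
  qed
qed

definition tp :: "nat \<Rightarrow> mon \<Rightarrow> mon" where
  "tp m \<alpha> = (\<Sum>i\<in>{1..m}. Poly_Mapping.single (T i) (lk \<alpha> (T i)))"

lemma lk_tp: "lk (tp m \<alpha>) v = (case v of T i \<Rightarrow> (if i \<in> {1..m} then lk \<alpha> (T i) else 0) | _ \<Rightarrow> 0)"
  unfolding tp_def lk_sum_single_T ..

lemma lk_tp_Dm: "\<alpha> \<in> Dm m \<Longrightarrow> lk (tp m \<alpha>) (T i) = lk \<alpha> (T i)"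
proof -
  assume a: "\<alpha> \<in> Dm m"
  show ?thesis
  proof (cases "i \<in> {1..m}")
    case True then show ?thesis by (simp add: lk_tp)
  next
    case False
    then have "T i \<notin> Svars m" unfolding Svars_def by auto
    then have "T i \<notin> Poly_Mapping.keys \<alpha>" using a unfolding Dm_def by blast
    then show ?thesis using False by (simp add: lk_tp in_keys_iff)
  qed
qed

lemma mdvd_tp: "mdvd (tp m \<alpha>) \<alpha>"
  unfolding mdvd_def lk_tp by (auto split: var.split)

lemma tp_keys: "Poly_Mapping.keys (tp m \<alpha>) \<subseteq> Rvars m"
proof
  fix v assume "v \<in> Poly_Mapping.keys (tp m \<alpha>)"
  then have "lk (tp m \<alpha>) v \<noteq> 0" by (simp add: in_keys_iff)
  then show "v \<in> Rvars m" unfolding Rvars_def by (cases v) (auto simp: lk_tp split: if_splits)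
qed



lemma final_step:
  assumes ab: "\<forall>i\<in>{1..m}. b i < a i" and K: "1 \<le> K" and aD: "\<alpha> \<in> Dm m"
    and MW: "lk M Wv = K" and MX: "\<forall>r. lk M (X r) = 0"
    and Ij: "\<forall>c\<in>Ij. 1 \<le> vabs m c \<and> vabs m c \<le> K"
    and pr: "pr \<in> XXs m \<union> WXs m \<union> pc m ` Ij" and dv: "mdvd (fst (rule m a b pr)) (\<alpha> + M)"
  shows "\<exists>pr'\<in>XXs m \<union> WXs m \<union> pc m ` Ij. mdvd (fst (rule m a b pr')) (tp m \<alpha> + M)"
proof -
  have Teq: "lk (tp m \<alpha> + M) (T i) = lk (\<alpha> + M) (T i)" for i
    using lk_tp_Dm[OF aD] by (simp add: lookup_add)
  have tW: "lk (tp m \<alpha> + M) Wv = K" using MW by (simp add: lookup_add lk_tp)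
  consider (x) "pr \<in> XXs m" | (w) "pr \<in> WXs m" | (p) c where "c \<in> Ij" "pr = pc m c" using pr by blast
  then show ?thesis
  proof cases
    case x
    then obtain j where j: "j \<in> {1..m}" "lk (fst (rule m a b pr)) (T j) = a j" using XXs_facts by blast
    have "a j \<le> lk (\<alpha> + M) (T j)" using dv j(2) unfolding mdvd_def by metis
    then have "a j - b j \<le> lk (tp m \<alpha> + M) (T j)" using Teq by simp
    then have md: "mdvd (wxlead a b j) (tp m \<alpha> + M)" using tW K by (intro mdvd_wxlead) simp_all
    have bj: "b j < a j" using ab j(1) by blast
    have "fst (rule m a b (wx j)) = wxlead a b j"
      unfolding rule_wx fst_conv using wx_lead[where m=m and a=a and b=b and l=j, OF j(1) bj] .
    moreover have "wx j \<in> WXs m" unfolding WXs_def using j(1) by blast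
    ultimately show ?thesis using md by (intro bexI[of _ "wx j"]) simp_all
  next
    case w
    have f: "basic m a b (rule m a b pr)" "lk (fst (rule m a b pr)) Wv = 1" "\<forall>r. lk (fst (rule m a b pr)) (X r) = 0"
      using WXs_facts[OF w ab] by blast+
    have "mdvd (fst (rule m a b pr)) (tp m \<alpha> + M)"
      unfolding mdvd_def
    proof
      fix v
      show "lk (fst (rule m a b pr)) v \<le> lk (tp m \<alpha> + M) v"
      proof (cases v)
        case (T i) then show ?thesis using dv Teq unfolding mdvd_def by metis
      next
        case (X r) then show ?thesis using f(3) by simp
      next
        case Wv then show ?thesis using f(2) tW K by simp
      next
        case Zv
        have "fst (rule m a b pr) \<in> Dm m" using f(1) unfolding basic_def by blast
        then show ?thesis using Zv Dm_Zv by simp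
      qed
    qed
    then show ?thesis using pr by blast
  next
    case p
    have c1: "1 \<le> vabs m c" "vabs m c \<le> K" using Ij p(1) by blast+
    have f: "basic m a b (rule m a b pr)" "lk (fst (rule m a b pr)) Wv = vabs m c" "\<forall>r. lk (fst (rule m a b pr)) (X r) = 0"
      using pc_facts[OF c1(1), where a=a and b=b] unfolding p(2) by blast+
    have "mdvd (fst (rule m a b pr)) (tp m \<alpha> + M)"
      unfolding mdvd_def
    proof
      fix v
      show "lk (fst (rule m a b pr)) v \<le> lk (tp m \<alpha> + M) v"
      proof (cases v)
        case (T i) then show ?thesis using dv Teq unfolding mdvd_def by metis
      next
        case (X r) then show ?thesis using f(3) by simp
      next
        case Wv then show ?thesis using f(2) tW c1(2) by simp
      next
        case Zv
        have "fst (rule m a b pr) \<in> Dm m" using f(1) unfolding basic_def by blast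
        then show ?thesis using Zv Dm_Zv by simp
      qed
    qed
    then show ?thesis using pr by blast
  qed
qed



theorem proposition3p2:
  fixes m :: nat and a b :: "nat \<Rightarrow> nat"
    and C :: "(nat \<Rightarrow> nat) set" and cs :: "(nat \<Rightarrow> nat) list"
  assumes m3: "m \<ge> 3"
    and ab: "\<forall>i\<in>{1..m}. b i < a i"
    and b2: "card {i\<in>{1..m}. b i \<noteq> 0} \<ge> 2"
    and Cfin: "finite C"
    and Csub: "C \<subseteq> {c \<in> Nvec m. vabs m c \<ge> 2}"
    and GB: "groebner_basis m
               (Gamma0 m a b \<union> {Pbin m a b (Wmon (vabs m c)) (Xmon m c) | c. c \<in> C})
               (Lideal m a b :: ('k::field) mpoly set)"
    and Cclosed: "\<forall>c\<in>C. \<forall>c'\<in>Nvec m. vabs m c' \<ge> 2 \<and> tau'_less m c' c \<longrightarrow> c' \<in> C"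
    and cs_set: "set cs = C"
    and cs_sorted: "sorted_wrt (tau'_less m) cs"
  shows "\<forall>j\<in>{1..length cs}.
           (let H = ideal_gen (Sring m)
                      (Gamma0 m a b \<union>
                       {Pbin m a b (Wmon (vabs m (cs ! i))) (Xmon m (cs ! i)) | i. i < j - 1});
                J = colon_ideal (Sring m) (init_ideal m H)
                      (init m (Pbin m a b (Wmon (vabs m (cs ! (j - 1)))) (Xmon m (cs ! (j - 1)))
                         :: 'k mpoly))
            in J = ideal_gen (Sring m) (J \<inter> Rring m))"
proof (intro ballI)
  fix j assume j: "j \<in> {1..length cs}"
  have jl: "j - 1 < length cs" using j by auto
  define Ij where "Ij = {cs ! i | i. i < j - 1}"
  define cj where "cj = cs ! (j - 1)"
  define K where "K = vabs m cj"
  define PN where "PN = XXs m \<union> WXs m \<union> pc m ` C"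
  define PJ where "PJ = XXs m \<union> WXs m \<union> pc m ` Ij"
  define RN where "RN = rule m a b ` PN"
  define Rj where "Rj = rule m a b ` PJ"
  define GN where "GN = (Gamma0 m a b \<union> {Pbin m a b (Wmon (vabs m c)) (Xmon m c) | c. c \<in> C} :: 'k mpoly set)"
  define Gj where "Gj = (Gamma0 m a b \<union> {Pbin m a b (Wmon (vabs m (cs ! i))) (Xmon m (cs ! i)) | i. i < j - 1} :: 'k mpoly set)"
  define H where "H = (ideal_gen (Sring m) Gj :: 'k mpoly set)"
  define M where "M = pb1 m a b (Wmon K) (Xmon m cj)"
  define J where "J = colon_ideal (Sring m) (init_ideal m H) (monom M (1::'k))"

  have Cv: "2 \<le> vabs m c" if cC: "c \<in> C" for c using Csub cC by blast
  have cjC: "cj \<in> C" unfolding cj_def using jl cs_set nth_mem by blast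
  have K2: "2 \<le> K" unfolding K_def using Cv[OF cjC] .
  have IjC: "Ij \<subseteq> C"
  proof
    fix c assume "c \<in> Ij"
    then obtain i where i: "c = cs ! i" "i < j - 1" unfolding Ij_def by blast
    then have "i < length cs" using jl by simp
    then show "c \<in> C" using i(1) cs_set nth_mem by blast
  qed
  have sortv: "vabs m (cs ! i) \<le> vabs m (cs ! i')" if "i \<le> i'" "i' < length cs" for i i'
  proof (cases "i = i'")
    case False
    then have "i < i'" using that(1) by simp
    then have "tau'_less m (cs ! i) (cs ! i')" using sorted_wrt_nth_less[OF cs_sorted] that(2) by blast
    then show ?thesis unfolding tau'_less_def by linarith
  qed simp
  have IjK: "vabs m c \<le> K" if cI: "c \<in> Ij" for c
  proof -
    obtain i where i: "c = cs ! i" "i < j - 1" using cI unfolding Ij_def by blast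
    show ?thesis unfolding i(1) K_def cj_def using sortv[of i "j - 1"] i(2) jl by simp
  qed
  have notIj: "K \<le> vabs m c" if cI: "c \<in> C" "c \<notin> Ij" for c
  proof -
    obtain i where i: "i < length cs" "c = cs ! i" using cI(1) cs_set by (metis in_set_conv_nth)
    have "\<not> i < j - 1" using cI(2) i(2) unfolding Ij_def by blast
    then show ?thesis unfolding i(2) K_def cj_def using sortv[of "j - 1" i] i(1) by simp
  qed

  have basicN: "basic m a b (rule m a b pr)" if prN: "pr \<in> PN" for pr
  proof -
    consider "pr \<in> XXs m" | "pr \<in> WXs m" | c where "c \<in> C" "pr = pc m c" using prN unfolding PN_def by blast
    then show ?thesis
    proof cases
      case 1 then show ?thesis using XXs_facts by blast
    next
      case 2 then show ?thesis using WXs_facts[OF _ ab] by blast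
    next
      case 3
      have "1 \<le> vabs m c" using Cv[OF 3(1)] by simp
      then show ?thesis using pc_facts 3(2) by blast
    qed
  qed
  have PJN: "PJ \<subseteq> PN" unfolding PJ_def PN_def using IjC by blast
  have basicJ: "basic m a b (rule m a b pr)" if prJ: "pr \<in> PJ" for pr using basicN PJN prJ by blast

  have good: "good m Rj" unfolding good_def Rj_def
  proof (intro allI impI)
    fix p q assume "(p, q) \<in> rule m a b ` PJ"
    then obtain pr where pr: "pr \<in> PJ" "(p, q) = rule m a b pr" by blast
    then show "p \<in> Dm m \<and> q \<in> Dm m \<and> lex_less m q p"
      using basicJ[OF pr(1)] unfolding basic_def by (metis fst_conv snd_conv)
  qed
  have reesR: "\<forall>p q. (p, q) \<in> Rj \<longrightarrow> rees_exp m a b p = rees_exp m a b q"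
  proof (intro allI impI)
    fix p q assume "(p, q) \<in> Rj"
    then obtain pr where pr: "pr \<in> PJ" "(p, q) = rule m a b pr" unfolding Rj_def by blast
    then show "rees_exp m a b p = rees_exp m a b q"
      using basicJ[OF pr(1)] unfolding basic_def by (metis fst_conv snd_conv)
  qed
  have Wb: "\<forall>p q. (p, q) \<in> Rj \<longrightarrow> lk p Wv \<le> K"
  proof (intro allI impI)
    fix p q assume "(p, q) \<in> Rj"
    then obtain pr where pr: "pr \<in> PJ" "(p, q) = rule m a b pr" unfolding Rj_def by blast
    have pf: "p = fst (rule m a b pr)" using pr(2) by (metis fst_conv)
    consider "pr \<in> XXs m" | "pr \<in> WXs m" | c where "c \<in> Ij" "pr = pc m c" using pr(1) unfolding PJ_def by blast
    then show "lk p Wv \<le> K"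
    proof cases
      case 1
      have "lk (fst (rule m a b pr)) Wv = 0" using XXs_facts[OF 1] by blast
      then show ?thesis using pf by simp
    next
      case 2
      have "lk (fst (rule m a b pr)) Wv = 1" using WXs_facts[OF 2 ab] by blast
      then show ?thesis using pf K2 by simp
    next
      case 3
      have "c \<in> C" using IjC 3(1) by blast
      then have "1 \<le> vabs m c" using Cv by fastforce
      then have "lk p Wv = vabs m c" using pc_facts[where a=a and b=b] pf 3(2) by blast
      then show ?thesis using IjK[OF 3(1)] by simp
    qed
  qed
  have KL: "KLhyps a b K Rj RN"
    unfolding KLhyps_def
  proof (intro conjI)
    show "\<forall>p q. (p, q) \<in> Rj \<longrightarrow> lk q Wv = 0"
    proof (intro allI impI)
      fix p q assume "(p, q) \<in> Rj"
      then obtain pr where pr: "pr \<in> PJ" "(p, q) = rule m a b pr" unfolding Rj_def by blast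
      then show "lk q Wv = 0" using basicJ[OF pr(1)] unfolding basic_def by (metis snd_conv)
    qed
    show "\<forall>p q. (p, q) \<in> RN \<longrightarrow> (p, q) \<notin> Rj \<longrightarrow> K \<le> lk p Wv"
    proof (intro allI impI)
      fix p q assume pq: "(p, q) \<in> RN" "(p, q) \<notin> Rj"
      then obtain pr where pr: "pr \<in> PN" "(p, q) = rule m a b pr" unfolding RN_def by blast
      have "pr \<notin> PJ" using pq(2) pr(2) unfolding Rj_def by blast
      then obtain c where c: "c \<in> C" "c \<notin> Ij" "pr = pc m c" using pr(1) unfolding PN_def PJ_def by blast
      have "1 \<le> vabs m c" using Cv[OF c(1)] by simp
      then have "lk (fst (rule m a b pr)) Wv = vabs m c" using pc_facts[where a=a and b=b] c(3) by blast
      then have "lk p Wv = vabs m c" using pr(2) by (metis fst_conv)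
      then show "K \<le> lk p Wv" using notIj[OF c(1,2)] by simp
    qed
    show "\<forall>p q. (p, q) \<in> Rj \<longrightarrow> lk p Wv = 0 \<longrightarrow> (\<exists>i. a i \<le> lk q (T i) \<and> (\<exists>q'. (wxlead a b i, q') \<in> Rj))"
    proof (intro allI impI)
      fix p q assume pq: "(p, q) \<in> Rj" "lk p Wv = 0"
      then obtain pr where pr: "pr \<in> PJ" "(p, q) = rule m a b pr" unfolding Rj_def by blast
      have pf: "p = fst (rule m a b pr)" "q = snd (rule m a b pr)" using pr(2) by (metis fst_conv, metis snd_conv)
      have "pr \<in> XXs m"
      proof (rule ccontr)
        assume nx: "pr \<notin> XXs m"
        consider "pr \<in> WXs m" | c where "c \<in> Ij" "pr = pc m c" using pr(1) nx unfolding PJ_def by blast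
        then show False
        proof cases
          case 1
          have "lk (fst (rule m a b pr)) Wv = 1" using WXs_facts[OF 1 ab] by blast
          then show False using pf pq(2) by simp
        next
          case 2
          have "2 \<le> vabs m c" using Cv IjC 2(1) by blast
          then have "1 \<le> vabs m c" by simp
          then have "lk p Wv = vabs m c" using pc_facts[where a=a and b=b] pf 2(2) by blast
          then show False using pq(2) \<open>2 \<le> vabs m c\<close> by simp
        qed
      qed
      then obtain i where i: "i \<in> {1..m}" "a i \<le> lk q (T i)" using XXs_facts pf by blast
      have bi: "b i < a i" using ab i(1) by blast
      have wl: "fst (rule m a b (wx i)) = wxlead a b i"
        unfolding rule_wx fst_conv using wx_lead[where m=m and a=a and b=b and l=i, OF i(1) bi] .
      have "wx i \<in> PJ" unfolding PJ_def WXs_def using i(1) by blast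
      then have "rule m a b (wx i) \<in> Rj" unfolding Rj_def by blast
      then have "(wxlead a b i, snd (rule m a b (wx i))) \<in> Rj" using wl by (metis prod.collapse)
      then show "\<exists>i. a i \<le> lk q (T i) \<and> (\<exists>q'. (wxlead a b i, q') \<in> Rj)" using i(2) by blast
    qed
    show "1 \<le> K" using K2 by simp
  qed

  have e1: "{Pbin m a b (Wmon (vabs m c)) (Xmon m c) | c. c \<in> C} = (\<lambda>pr. Pbin m a b (fst pr) (snd pr)) ` (pc m ` C)"
    unfolding image_image pc_def fst_conv snd_conv by blast
  have e2: "{Pbin m a b (Wmon (vabs m (cs ! i))) (Xmon m (cs ! i)) | i. i < j - 1} = (\<lambda>pr. Pbin m a b (fst pr) (snd pr)) ` (pc m ` Ij)"
    unfolding image_image pc_def fst_conv snd_conv Ij_def by blast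
  have GN_char: "GN = (\<lambda>pr. Pbin m a b (fst pr) (snd pr)) ` PN"
    unfolding GN_def PN_def Gamma0_char e1 by (simp only: image_Un)
  have Gj_char: "Gj = (\<lambda>pr. Pbin m a b (fst pr) (snd pr)) ` PJ"
    unfolding Gj_def PJ_def Gamma0_char e2 by (simp only: image_Un)

  have leads: "\<forall>g\<in>GN. g \<noteq> 0 \<longrightarrow> (\<exists>q. (lead_mon m g, q) \<in> RN)"
  proof (intro ballI impI)
    fix g :: "'k mpoly" assume "g \<in> GN"
    then obtain pr where pr: "pr \<in> PN" "g = Pbin m a b (fst pr) (snd pr)" unfolding GN_char by blast
    have "lead_mon m g = fst (rule m a b pr)" unfolding pr(2) using lead_Pbin(1)[OF basicN[OF pr(1)]] .
    moreover have "rule m a b pr \<in> RN" unfolding RN_def using pr(1) by blast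
    ultimately show "\<exists>q. (lead_mon m g, q) \<in> RN" by (metis prod.collapse)
  qed
  have UNF: "\<forall>v1 v2. v1 \<in> Dm m \<longrightarrow> v2 \<in> Dm m \<longrightarrow> rees_exp m a b v1 = rees_exp m a b v2
               \<longrightarrow> irred RN v1 \<longrightarrow> irred RN v2 \<longrightarrow> v1 = v2"
    using unf_lemma[OF GB[folded GN_def] leads] .
  have lc: "loc_conf m Rj" using loc_conf_lemma[OF good KL Wb reesR UNF] .

  have Gj_form: "\<forall>x\<in>Gj. \<exists>p q. (p, q) \<in> Rj \<and> x = monom p 1 - monom q 1"
  proof
    fix x :: "'k mpoly" assume "x \<in> Gj"
    then obtain pr where pr: "pr \<in> PJ" "x = Pbin m a b (fst pr) (snd pr)" unfolding Gj_char by blast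
    have "rule m a b pr \<in> Rj" unfolding Rj_def using pr(1) by blast
    then show "\<exists>p q. (p, q) \<in> Rj \<and> x = monom p 1 - monom q 1"
      using pr(2) Pbin_rule by (metis prod.collapse)
  qed
  have GjS: "Gj \<subseteq> (Sring m :: 'k mpoly set)"
  proof
    fix x :: "'k mpoly" assume "x \<in> Gj"
    then obtain pr where pr: "pr \<in> PJ" "x = Pbin m a b (fst pr) (snd pr)" unfolding Gj_char by blast
    then show "x \<in> Sring m" using lead_Pbin(3)[OF basicJ[OF pr(1)]] by simp
  qed
  have HS: "H \<subseteq> Sring m" unfolding H_def by (rule ideal_gen_sub[OF GjS])
  have LR: "\<not> irred Rj (lead_mon m h)" if hH: "h \<in> H" "h \<noteq> 0" for h
    using lead_reducible[OF good lc Gj_form, of h] hH HS unfolding H_def by blast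

  have cj1: "1 \<le> vabs m cj" using Cv[OF cjC] by simp
  have Mfacts: "basic m a b (rule m a b (pc m cj))" "lk M Wv = K" "\<forall>r. lk M (X r) = 0"
    using pc_facts[OF cj1, where a=a and b=b] unfolding M_def K_def rule_pc fst_conv by blast+
  have MD: "M \<in> Dm m" using Mfacts(1) unfolding basic_def M_def K_def rule_pc fst_conv by blast
  have initM: "init m (Pbin m a b (Wmon (vabs m (cs ! (j - 1)))) (Xmon m (cs ! (j - 1))) :: 'k mpoly) = monom M 1"
  proof -
    have "lead_mon m (Pbin m a b (fst (pc m cj)) (snd (pc m cj)) :: 'k mpoly) = fst (rule m a b (pc m cj))"
      using lead_Pbin(1)[OF Mfacts(1)] .
    then show ?thesis unfolding init_def pc_def M_def K_def cj_def by (simp add: rule_def)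
  qed
  have IjK': "\<forall>c\<in>Ij. 1 \<le> vabs m c \<and> vabs m c \<le> K"
  proof
    fix c assume cI: "c \<in> Ij"
    then have "c \<in> C" using IjC by blast
    then have "2 \<le> vabs m c" using Cv by blast
    then show "1 \<le> vabs m c \<and> vabs m c \<le> K" using IjK[OF cI] by simp
  qed

  have inH_ideal: "init_ideal m H = ideal_gen (Sring m) {init m p | p. p \<in> H \<and> p \<noteq> 0}"
    unfolding init_ideal_def ..

  have main: "J = ideal_gen (Sring m) (J \<inter> Rring m)"
  proof
    show "ideal_gen (Sring m) (J \<inter> Rring m) \<subseteq> J"
    proof
      fix x assume x: "x \<in> ideal_gen (Sring m) (J \<inter> Rring m)"
      have JS: "J \<subseteq> Sring m" unfolding J_def colon_ideal_def by blast
      obtain F c where F: "finite F" "F \<subseteq> J \<inter> Rring m" "\<forall>g\<in>F. c g \<in> Sring m" "x = (\<Sum>g\<in>F. c g * g)"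
        using x unfolding ideal_gen_def by blast
      have xS: "x \<in> Sring m" using ideal_gen_sub[of "J \<inter> Rring m"] JS x by blast
      have "x * monom M 1 = (\<Sum>g\<in>F. c g * (g * monom M 1))"
        unfolding F(4) sum_distrib_right by (simp add: mult.assoc)
      also have "\<dots> \<in> init_ideal m H"
        unfolding inH_ideal
      proof (rule ideal_gen_sum[OF Sring_zero Sring_add F(1)])
        fix g assume g: "g \<in> F"
        have "g * monom M 1 \<in> init_ideal m H" using F(2) g unfolding J_def colon_ideal_def by blast
        then have gM': "g * monom M 1 \<in> ideal_gen (Sring m) {init m p |p. p \<in> H \<and> p \<noteq> 0}"
          unfolding inH_ideal .
        have cgS: "c g \<in> Sring m" using F(3) g by blast
        show "c g * (g * monom M 1) \<in> ideal_gen (Sring m) {init m p |p. p \<in> H \<and> p \<noteq> 0}"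
          using ideal_gen_mult[OF Sring_mult cgS gM'] .
      qed
      finally show "x \<in> J" unfolding J_def colon_ideal_def using xS by blast
    qed
  next
    show "J \<subseteq> ideal_gen (Sring m) (J \<inter> Rring m)"
    proof
      fix g assume g: "g \<in> J"
      have gS: "g \<in> Sring m" and gM: "g * monom M 1 \<in> init_ideal m H"
        using g unfolding J_def colon_ideal_def by blast+
      have tm: "Poly_Mapping.single \<alpha> (lk g \<alpha>) \<in> ideal_gen (Sring m) (J \<inter> Rring m)"
        if a: "\<alpha> \<in> Poly_Mapping.keys g" for \<alpha>
      proof -
        have aD: "\<alpha> \<in> Dm m" using Sring_keys[OF gS] a by blast
        have "lk (g * monom M 1) (\<alpha> + M) = lk g \<alpha>"
          unfolding monom_def using lk_mult_single_shift[of g M "1::'k" \<alpha>] by simp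
        then have k: "\<alpha> + M \<in> Poly_Mapping.keys (g * monom M 1)" using a by (simp add: in_keys_iff)
        have gs: "\<forall>x\<in>{init m p | p. p \<in> H \<and> p \<noteq> 0}. \<exists>p. x = monom p 1 \<and> (\<exists>h\<in>H. h \<noteq> 0 \<and> p = lead_mon m h)"
          unfolding init_def by blast
        have "\<exists>p s. (\<exists>h\<in>H. h \<noteq> 0 \<and> p = lead_mon m h) \<and> \<alpha> + M = s + p"
          by (rule monideal_keys[OF gs gM[unfolded inH_ideal] k])
        then obtain h s where hs: "h \<in> H" "h \<noteq> 0" "\<alpha> + M = s + lead_mon m h" by blast
        obtain p' q' where pq': "(p', q') \<in> Rj" "mdvd p' (lead_mon m h)"
          using LR[OF hs(1,2)] unfolding irred_def by blast
        have md: "mdvd p' (\<alpha> + M)" unfolding hs(3) using pq'(2) mdvd_add mdvd_trans by blast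
        obtain pr where pr: "pr \<in> PJ" "(p', q') = rule m a b pr" using pq'(1) unfolding Rj_def by blast
        have md2: "mdvd (fst (rule m a b pr)) (\<alpha> + M)" using md pr(2) by (metis fst_conv)
        have prX: "pr \<in> XXs m \<union> WXs m \<union> pc m ` Ij" using pr(1) unfolding PJ_def .
        have K1: "1 \<le> K" using K2 by simp
        obtain pr' where pr': "pr' \<in> PJ" "mdvd (fst (rule m a b pr')) (tp m \<alpha> + M)"
          using final_step[OF ab K1 aD Mfacts(2,3) IjK' prX md2] unfolding PJ_def by blast
        define g'' where "g'' = (Pbin m a b (fst pr') (snd pr') :: 'k mpoly)"
        have "g'' \<in> Gj" unfolding Gj_char g''_def using pr'(1) by blast
        then have "1 * g'' \<in> H" unfolding H_def by (rule ideal_gen_gen) (rule Sring_one)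
        then have g''H: "g'' \<in> H" by simp
        have g''0: "g'' \<noteq> 0" and lg'': "lead_mon m g'' = fst (rule m a b pr')"
          unfolding g''_def using lead_Pbin[OF basicJ[OF pr'(1)]] by blast+
        define s' where "s' = (tp m \<alpha> + M) - fst (rule m a b pr')"
        have tD: "tp m \<alpha> \<in> Dm m" using tp_keys unfolding Dm_def Rvars_def Svars_def by blast
        have s'D: "s' \<in> Dm m" unfolding s'_def using tD MD Dm_minus by simp
        have "monom (tp m \<alpha> + M) (1::'k) = monom s' 1 * init m g''"
          unfolding init_def lg'' monom_def mult_single s'_def using mdvd_decomp[OF pr'(2)] by simp
        also have "\<dots> \<in> init_ideal m H" unfolding inH_ideal
        proof (rule ideal_gen_gen)
          show "init m g'' \<in> {init m p |p. p \<in> H \<and> p \<noteq> 0}" using g''H g''0 by blast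
          show "monom s' 1 \<in> Sring m" using s'D unfolding Dm_def mem_Collect_eq by (rule Sring_monom)
        qed
        finally have inI: "monom (tp m \<alpha> + M) (1::'k) \<in> init_ideal m H" .
        have tR: "monom (tp m \<alpha>) (1::'k) \<in> Rring m" by (rule Sring_monom[OF tp_keys])
        have tS: "monom (tp m \<alpha>) (1::'k) \<in> Sring m" using tD unfolding Dm_def mem_Collect_eq by (rule Sring_monom)
        have "monom (tp m \<alpha>) (1::'k) * monom M 1 = monom (tp m \<alpha> + M) 1"
          unfolding monom_def mult_single by simp
        then have tJ: "monom (tp m \<alpha>) (1::'k) \<in> J" unfolding J_def colon_ideal_def using tS inI by simp
        have rD: "\<alpha> - tp m \<alpha> \<in> Dm m" using Dm_minus[OF aD] .
        have "Poly_Mapping.single \<alpha> (lk g \<alpha>) = monom (\<alpha> - tp m \<alpha>) (lk g \<alpha>) * monom (tp m \<alpha>) 1"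
          unfolding monom_def mult_single using mdvd_decomp[OF mdvd_tp[of m \<alpha>]] by simp
        also have "\<dots> \<in> ideal_gen (Sring m) (J \<inter> Rring m)"
        proof (rule ideal_gen_gen)
          show "monom (tp m \<alpha>) 1 \<in> J \<inter> Rring m" using tJ tR by blast
          show "monom (\<alpha> - tp m \<alpha>) (lk g \<alpha>) \<in> Sring m" using rD unfolding Dm_def mem_Collect_eq by (rule Sring_monom)
        qed
        finally show ?thesis .
      qed
      have "g = (\<Sum>\<alpha>\<in>Poly_Mapping.keys g. Poly_Mapping.single \<alpha> (lk g \<alpha>))" by (rule poly_expand)
      also have "\<dots> \<in> ideal_gen (Sring m) (J \<inter> Rring m)"
        by (rule ideal_gen_sum[OF Sring_zero Sring_add]) (simp_all add: tm)
      finally show "g \<in> ideal_gen (Sring m) (J \<inter> Rring m)" .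
    qed
  qed
  show "let H = ideal_gen (Sring m)
                      (Gamma0 m a b \<union>
                       {Pbin m a b (Wmon (vabs m (cs ! i))) (Xmon m (cs ! i)) | i. i < j - 1});
                J = colon_ideal (Sring m) (init_ideal m H)
                      (init m (Pbin m a b (Wmon (vabs m (cs ! (j - 1)))) (Xmon m (cs ! (j - 1)))
                         :: 'k mpoly))
            in J = ideal_gen (Sring m) (J \<inter> Rring m)"
    unfolding Let_def initM using main unfolding J_def H_def Gj_def .
qed


end
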